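(* Let $n,m,\bar m$ be positive integers with $n\le m$ and $n\le \bar m$. Let $\mathcal F$ and $\bar{\mathcal F}$ be the fields of rational functions in $x_1,\dots,x_m$ and in $\bar x_1,\dots,\bar x_{\bar m}$, respectively. Let $\varphi:\mathbb{Q}_{\mathrm{sf}}(x_1,\dots,x_m)\to \mathrm{Trop}(\bar x_{n+1},\dots,\bar x_{\bar m})$ be a semifield homomorphism (determined by an arbitrary choice of Laurent monomials $\varphi(x_i)$), and let $\psi:\mathbb{Q}_{\mathrm{sf}}(x_1,\dots,x_m)\to\mathbb{Q}_{\mathrm{sf}}(\bar x_1,\dots,\bar x_{\bar m})$ be the semifield homomorphism with $\psi(x_i)=\bar x_i\,\varphi(x_i)$ for $i\le n$ and $\psi(x_i)=\varphi(x_i)$ for $i>n$. Let $(\mathbf{x}(t),\mathbf{y}(t),B(t))_{t\in\mathbb{T}_n}$ be a seed pattern in $\mathcal F$ with frozen variables $x_{n+1},\dots,x_m$, with $\mathbf{x}(t)=(x_{1;t},\dots,x_{n;t})$, $\mathbf{y}(t)=(y_{1;t},\dots,y_{n;t})\in\mathrm{Trop}(x_{n+1},\dots,x_m)^n$, $B(t)=(b^t_{ij})$, and initial cluster $\mathbf{x}(t_\circ)=(x_1,\dots,x_n)$. Define $$\bar x_{i;t}=\frac{\psi(x_{i;t})}{\varphi(x_{i;t})},\qquad \bar y_{k;t}=\varphi(\hat y_{k;t})=\varphi(y_{k;t})\prod_{i=1}^n\varphi(x_{i;t})^{b^t_{ik}},$$ and $\bar{\mathbf x}(t)=(\bar x_{1;t},\dots,\bar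 x_{n;t})$, $\bar{\mathbf y}(t)=(\bar y_{1;t},\dots,\bar y_{n;t})$. Then $(\bar{\mathbf x}(t),\bar{\mathbf y}(t),B(t))_{t\in\mathbb{T}_n}$ is a seed pattern in $\bar{\mathcal F}$, with the same exchange matrices $B(t)$ and with frozen variables $\bar x_{n+1},\dots,\bar x_{\bar m}$.
   Context: $\mathbb{Q}_{\mathrm{sf}}(u_1,\dots,u_l)$ denotes the semifield of subtraction-free rational expressions in $u_1,\dots,u_l$ (with ordinary multiplication and addition). $\mathrm{Trop}(u_1,\dots,u_l)$ is the tropical semifield: the multiplicative group of Laurent monomials in $u_1,\dots,u_l$ with addition $\prod u_j^{a_j}\oplus\prod u_j^{b_j}=\prod u_j^{\min(a_j,b_j)}$. A semifield homomorphism preserves multiplication and sends $+$ to the addition of the target. $\mathbb{T}_n$ is the $n$-regular tree whose edges are labeled by $1,\dots,n$ so that the $n$ edges at each vertex have distinct labels. A seed pattern in a field $\mathcal F$ (of rational functions in $m$ variables) with frozen variables $x_{n+1},\dots,x_m$ is an assignment to each $t\in\mathbb{T}_n$ of a triple $(\mathbf{x}(t),\mathbf{y}(t),B(t))$, where $\mathbf{x}(t)=(x_{1;t},\dots,x_{n;t})\in\mathcal F^n$ is such that $x_{1;t},\dots,x_{n;t},x_{n+1},\dots,x_m$ are algebraically independent and generate $\mathcal F$, $\mathbf{y}(t)\in\mathrm{Trop}(x_{n+1},\dots,x_m)^n$, and $B(t)=(b^t_{ij})$ is a skew-symmetrizable integer $n\times n$ matrix, such that for every edge $t\overset{k}{-}t'$: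 $B(t')=\mu_k(B(t))$ (matrix mutation: $b'_{ij}=-b_{ij}$ if $k\in\{i,j\}$, else $b'_{ij}=b_{ij}+\mathrm{sgn}(b_{ik})\max(b_{ik}b_{kj},0)$); $y_{k;t'}=y_{k;t}^{-1}$ and $y_{j;t'}=y_{j;t}\,y_{k;t}^{\max(b^t_{kj},0)}(y_{k;t}\oplus1)^{-b^t_{kj}}$ for $j\ne k$; $x_{i;t'}=x_{i;t}$ for $i\ne k$; and $$x_{k;t}\,x_{k;t'}=\frac{y_{k;t}\prod_{b^t_{ik}>0}x_{i;t}^{b^t_{ik}}+\prod_{b^t_{ik}<0}x_{i;t}^{-b^t_{ik}}}{y_{k;t}\oplus1}$$ (products over $i\in\{1,\dots,n\}$). By these relations every $x_{i;t}$ is a subtraction-free rational expression in $x_1,\dots,x_m$, so $\psi(x_{i;t})$ and $\varphi(x_{i;t})$ are defined. Here $\hat y_{k;t}=y_{k;t}\prod_{i=1}^n x_{i;t}^{b^t_{ik}}$. *)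

theory Defs
  imports Complex_Main "HOL-Library.Poly_Mapping" "HOL-Computational_Algebra.Fraction_Field"
begin

type_synonym mpoly = "(nat \<Rightarrow>\<^sub>0 nat) \<Rightarrow>\<^sub>0 rat"
type_synonym rfun = "mpoly fract"

definition var :: "nat \<Rightarrow> rfun" where
  "var i = Fract (Poly_Mapping.single (Poly_Mapping.single i 1) 1) 1"

definition const_rf :: "rat \<Rightarrow> rfun" where
  "const_rf c = Fract (Poly_Mapping.single 0 c) 1"

definition poly_in :: "nat set \<Rightarrow> mpoly \<Rightarrow> bool" where
  "poly_in I P \<longleftrightarrow> (\<forall>mon \<in> Poly_Mapping.keys P. Poly_Mapping.keys (mon :: nat \<Rightarrow>\<^sub>0 nat) \<subseteq> I)"

definition eval_poly :: "mpoly \<Rightarrow> (nat \<Rightarrow> rfun) \<Rightarrow> rfun" where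
  "eval_poly P g = (\<Sum>mon \<in> Poly_Mapping.keys P. const_rf (Poly_Mapping.lookup P mon) * (\<Prod>i \<in> Poly_Mapping.keys mon. g i ^ Poly_Mapping.lookup mon i))"

definition gen_field :: "nat set \<Rightarrow> (nat \<Rightarrow> rfun) \<Rightarrow> rfun set" where
  "gen_field I g = {eval_poly P g / eval_poly Q g | P Q.
      poly_in I P \<and> poly_in I Q \<and> eval_poly Q g \<noteq> 0}"

definition ratfield :: "nat \<Rightarrow> rfun set" where
  "ratfield m = gen_field {1..m} var"

definition alg_indep :: "nat set \<Rightarrow> (nat \<Rightarrow> rfun) \<Rightarrow> bool" where
  "alg_indep I g \<longleftrightarrow> (\<forall>P. poly_in I P \<longrightarrow> eval_poly P g = 0 \<longrightarrow> P = 0)"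

inductive_set sf :: "nat \<Rightarrow> rfun set" for m :: nat where
  sf_var: "i \<in> {1..m} \<Longrightarrow> var i \<in> sf m"
| sf_add: "f \<in> sf m \<Longrightarrow> g \<in> sf m \<Longrightarrow> f + g \<in> sf m"
| sf_mult: "f \<in> sf m \<Longrightarrow> g \<in> sf m \<Longrightarrow> f * g \<in> sf m"
| sf_div: "f \<in> sf m \<Longrightarrow> g \<in> sf m \<Longrightarrow> f / g \<in> sf m"

section \<open>Tropical semifield Trop(u_{n+1},...,u_M) as exponent vectors\<close>

type_synonym trop = "nat \<Rightarrow> int"

definition trop_set :: "nat \<Rightarrow> nat \<Rightarrow> trop set" where
  "trop_set n M = {e. \<forall>j. j \<notin> {n+1..M} \<longrightarrow> e j = 0}"

definition trop_mult :: "trop \<Rightarrow> trop \<Rightarrow> trop" where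
  "trop_mult e f = (\<lambda>j. e j + f j)"

definition trop_add :: "trop \<Rightarrow> trop \<Rightarrow> trop" where
  "trop_add e f = (\<lambda>j. min (e j) (f j))"

definition laurent_mono :: "nat \<Rightarrow> nat \<Rightarrow> trop \<Rightarrow> rfun" where
  "laurent_mono n M e = (\<Prod>j \<in> {n+1..M}. var j powi e j)"

definition sf_hom_trop :: "nat \<Rightarrow> nat \<Rightarrow> nat \<Rightarrow> (rfun \<Rightarrow> trop) \<Rightarrow> bool" where
  "sf_hom_trop m n M \<phi> \<longleftrightarrow>
     (\<forall>f \<in> sf m. \<phi> f \<in> trop_set n M) \<and>
     (\<forall>f \<in> sf m. \<forall>g \<in> sf m. \<phi> (f * g) = trop_mult (\<phi> f) (\<phi> g)) \<and>
     (\<forall>f \<in> sf m. \<forall>g \<in> sf m. \<phi> (f + g) = trop_add (\<phi> f) (\<phi> g))"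

definition sf_hom :: "nat \<Rightarrow> nat \<Rightarrow> (rfun \<Rightarrow> rfun) \<Rightarrow> bool" where
  "sf_hom m M \<psi> \<longleftrightarrow>
     (\<forall>f \<in> sf m. \<psi> f \<in> sf M) \<and>
     (\<forall>f \<in> sf m. \<forall>g \<in> sf m. \<psi> (f * g) = \<psi> f * \<psi> g) \<and>
     (\<forall>f \<in> sf m. \<forall>g \<in> sf m. \<psi> (f + g) = \<psi> f + \<psi> g)"

text \<open>Vertices: reduced words over {1..n} (no two equal adjacent letters); the empty
  word is the base vertex t_0. The edge labelled k joins t and t @ [k].\<close>
definition tree :: "nat \<Rightarrow> nat list set" where
  "tree n = {ws. set ws \<subseteq> {1..n} \<and> successively (\<noteq>) ws}"

definition tree_edge :: "nat \<Rightarrow> nat list \<Rightarrow> nat \<Rightarrow> nat list \<Rightarrow> bool" where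
  "tree_edge n t k t' \<longleftrightarrow> t \<in> tree n \<and> t' \<in> tree n \<and> k \<in> {1..n} \<and>
     (t' = t @ [k] \<or> t = t' @ [k])"

definition skew_symmetrizable :: "nat \<Rightarrow> (nat \<Rightarrow> nat \<Rightarrow> int) \<Rightarrow> bool" where
  "skew_symmetrizable n B \<longleftrightarrow>
     (\<exists>d :: nat \<Rightarrow> int. (\<forall>i \<in> {1..n}. d i > 0) \<and>
        (\<forall>i \<in> {1..n}. \<forall>j \<in> {1..n}. d i * B i j = - (d j * B j i)))"

definition matrix_mutation_rel ::
  "nat \<Rightarrow> nat \<Rightarrow> (nat \<Rightarrow> nat \<Rightarrow> int) \<Rightarrow> (nat \<Rightarrow> nat \<Rightarrow> int) \<Rightarrow> bool" where
  "matrix_mutation_rel n k B B' \<longleftrightarrow>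
     (\<forall>i \<in> {1..n}. \<forall>j \<in> {1..n}.
        B' i j = (if i = k \<or> j = k then - B i j
                  else B i j + sgn (B i k) * max (B i k * B k j) 0))"

definition y_mutation_rel ::
  "nat \<Rightarrow> nat \<Rightarrow> (nat \<Rightarrow> nat \<Rightarrow> int) \<Rightarrow> (nat \<Rightarrow> trop) \<Rightarrow> (nat \<Rightarrow> trop) \<Rightarrow> bool" where
  "y_mutation_rel n k B y y' \<longleftrightarrow>
     y' k = (\<lambda>l. - y k l) \<and>
     (\<forall>j \<in> {1..n}. j \<noteq> k \<longrightarrow>
        y' j = (\<lambda>l. y j l + max (B k j) 0 * y k l - B k j * min (y k l) 0))"

text \<open>Exchange relation; the frozen variables are var (n+1), ..., var M and
  y-variables are Laurent monomials in them (trop_add e 0 is e \<oplus> 1).\<close>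
definition x_mutation_rel ::
  "nat \<Rightarrow> nat \<Rightarrow> nat \<Rightarrow> (nat \<Rightarrow> nat \<Rightarrow> int) \<Rightarrow> (nat \<Rightarrow> trop)
     \<Rightarrow> (nat \<Rightarrow> rfun) \<Rightarrow> (nat \<Rightarrow> rfun) \<Rightarrow> bool" where
  "x_mutation_rel n M k B y x x' \<longleftrightarrow>
     (\<forall>i \<in> {1..n}. i \<noteq> k \<longrightarrow> x' i = x i) \<and>
     x k * x' k =
       (laurent_mono n M (y k) * (\<Prod>i \<in> {i \<in> {1..n}. B i k > 0}. x i ^ nat (B i k))
          + (\<Prod>i \<in> {i \<in> {1..n}. B i k < 0}. x i ^ nat (- B i k)))
       / laurent_mono n M (trop_add (y k) (\<lambda>_. 0))"

definition seed_pattern ::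
  "nat \<Rightarrow> nat \<Rightarrow> (nat list \<Rightarrow> nat \<Rightarrow> rfun) \<Rightarrow> (nat list \<Rightarrow> nat \<Rightarrow> trop)
     \<Rightarrow> (nat list \<Rightarrow> nat \<Rightarrow> nat \<Rightarrow> int) \<Rightarrow> bool" where
  "seed_pattern n M x y B \<longleftrightarrow>
     (\<forall>t \<in> tree n.
        (\<forall>i \<in> {1..n}. x t i \<in> ratfield M) \<and>
        alg_indep {1..M} (\<lambda>i. if i \<le> n then x t i else var i) \<and>
        gen_field {1..M} (\<lambda>i. if i \<le> n then x t i else var i) = ratfield M \<and>
        (\<forall>k \<in> {1..n}. y t k \<in> trop_set n M) \<and>
        skew_symmetrizable n (B t)) \<and>
     (\<forall>t k t'. tree_edge n t k t' \<longrightarrow>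
        matrix_mutation_rel n k (B t) (B t') \<and>
        y_mutation_rel n k (B t) (y t) (y t') \<and>
        x_mutation_rel n M k (B t) (y t) (x t) (x t'))"

end

theory Submission
  imports Defs
begin


definition monev :: "(nat \<Rightarrow>\<^sub>0 nat) \<Rightarrow> (nat \<Rightarrow> rfun) \<Rightarrow> rfun" where
  "monev a g = (\<Prod>i \<in> Poly_Mapping.keys a. g i ^ Poly_Mapping.lookup a i)"

lemma monev_superset:
  assumes "finite S" "Poly_Mapping.keys a \<subseteq> S"
  shows "monev a g = (\<Prod>i \<in> S. g i ^ Poly_Mapping.lookup a i)"
  unfolding monev_def
  by (rule prod.mono_neutral_left) (use assms in \<open>auto simp: in_keys_iff\<close>)

lemma monev_add: "monev (a + b) g = monev a g * monev b g"
proof -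
  let ?S = "Poly_Mapping.keys a \<union> Poly_Mapping.keys b"
  have "monev (a+b) g = (\<Prod>i \<in> ?S. g i ^ Poly_Mapping.lookup (a+b) i)"
    by (rule monev_superset) (simp_all add: keys_add)
  also have "\<dots> = (\<Prod>i \<in> ?S. g i ^ Poly_Mapping.lookup a i) * (\<Prod>i \<in> ?S. g i ^ Poly_Mapping.lookup b i)"
    by (simp add: lookup_add power_add prod.distrib)
  also have "\<dots> = monev a g * monev b g"
    by (subst (1 2) monev_superset[of ?S]) auto
  finally show ?thesis .
qed

lemma monev_zero[simp]: "monev 0 g = 1"
  by (simp add: monev_def)

lemma monev_single: "monev (Poly_Mapping.single i e) g = g i ^ e"
  by (simp add: monev_def)

lemma monev_cong:
  "(\<And>i. i \<in> Poly_Mapping.keys a \<Longrightarrow> g i = h i) \<Longrightarrow> monev a g = monev a h"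
  unfolding monev_def by (rule prod.cong) auto

lemma const_rf_0[simp]: "const_rf 0 = 0"
  by (simp add: const_rf_def Zero_fract_def)

lemma const_rf_1[simp]: "const_rf 1 = 1"
  by (simp add: const_rf_def One_fract_def)

lemma const_rf_add: "const_rf (c + d) = const_rf c + const_rf d"
  by (simp add: const_rf_def single_add)

lemma const_rf_mult: "const_rf (c * d) = const_rf c * const_rf d"
  by (simp add: const_rf_def mult_single)

lemma eval_superset:
  assumes "finite S" "Poly_Mapping.keys P \<subseteq> S"
  shows "eval_poly P g = (\<Sum>mon \<in> S. const_rf (Poly_Mapping.lookup P mon) * monev mon g)"
  unfolding eval_poly_def monev_def[symmetric]
  by (rule sum.mono_neutral_left) (use assms in \<open>auto simp: in_keys_iff\<close>)

lemma eval_add: "eval_poly (P + Q) g = eval_poly P g + eval_poly Q g"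
proof -
  let ?S = "Poly_Mapping.keys P \<union> Poly_Mapping.keys Q"
  have "eval_poly (P+Q) g = (\<Sum>mon \<in> ?S. const_rf (Poly_Mapping.lookup (P+Q) mon) * monev mon g)"
    by (rule eval_superset) (simp_all add: keys_add)
  also have "\<dots> = (\<Sum>mon \<in> ?S. const_rf (Poly_Mapping.lookup P mon) * monev mon g)
     + (\<Sum>mon \<in> ?S. const_rf (Poly_Mapping.lookup Q mon) * monev mon g)"
    by (simp add: lookup_add const_rf_add distrib_right sum.distrib)
  also have "\<dots> = eval_poly P g + eval_poly Q g"
    by (subst (1 2) eval_superset[of ?S]) auto
  finally show ?thesis .
qed

lemma eval_zero[simp]: "eval_poly 0 g = 0"
  by (simp add: eval_poly_def)

lemma eval_sum: "eval_poly (\<Sum>i\<in>S. F i) g = (\<Sum>i\<in>S. eval_poly (F i) g)"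
  by (induction S rule: infinite_finite_induct) (auto simp: eval_add)

lemma eval_single: "eval_poly (Poly_Mapping.single a c) g = const_rf c * monev a g"
  by (simp add: eval_poly_def monev_def)

lemma pm_repr:
  fixes f :: "'a \<Rightarrow>\<^sub>0 'b::comm_monoid_add"
  shows "f = (\<Sum>a\<in>Poly_Mapping.keys f. Poly_Mapping.single a (Poly_Mapping.lookup f a))"
proof (rule poly_mapping_eqI)
  fix x
  have "Poly_Mapping.lookup (\<Sum>a\<in>Poly_Mapping.keys f. Poly_Mapping.single a (Poly_Mapping.lookup f a)) x
     = (\<Sum>a\<in>Poly_Mapping.keys f. (Poly_Mapping.lookup f a when a = x))"
    by (simp add: lookup_sum lookup_single)
  also have "\<dots> = Poly_Mapping.lookup f x"
  proof (cases "x \<in> Poly_Mapping.keys f")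
    case True
    then show ?thesis by (simp add: sum.delta when_def)
  next
    case False
    then show ?thesis by (simp add: when_def in_keys_iff)
  qed
  finally show "Poly_Mapping.lookup f x = Poly_Mapping.lookup (\<Sum>a\<in>Poly_Mapping.keys f. Poly_Mapping.single a (Poly_Mapping.lookup f a)) x" ..
qed

lemma eval_mult: "eval_poly (P * Q) g = eval_poly P g * eval_poly Q g"
proof -
  have "P * Q = (\<Sum>a\<in>Poly_Mapping.keys P. \<Sum>b\<in>Poly_Mapping.keys Q.
       Poly_Mapping.single a (Poly_Mapping.lookup P a) * Poly_Mapping.single b (Poly_Mapping.lookup Q b))"
    by (subst (1) pm_repr[of P], subst (1) pm_repr[of Q]) (simp add: sum_distrib_left sum_distrib_right sum.swap[where A="Poly_Mapping.keys Q"])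
  then have "eval_poly (P * Q) g = (\<Sum>a\<in>Poly_Mapping.keys P. \<Sum>b\<in>Poly_Mapping.keys Q.
      (const_rf (Poly_Mapping.lookup P a) * monev a g) * (const_rf (Poly_Mapping.lookup Q b) * monev b g))"
    by (simp add: eval_sum mult_single eval_single const_rf_mult monev_add mult_ac)
  also have "\<dots> = eval_poly P g * eval_poly Q g"
    by (simp add: eval_poly_def monev_def sum_distrib_left sum_distrib_right sum.swap[where A="Poly_Mapping.keys Q"] mult_ac)
  finally show ?thesis .
qed

lemma eval_one[simp]: "eval_poly 1 g = 1"
  by (simp add: eval_poly_def)

lemma eval_power: "eval_poly (P ^ e) g = eval_poly P g ^ e"
  by (induction e) (auto simp: eval_mult)

lemma eval_prod: "eval_poly (\<Prod>i\<in>S. F i) g = (\<Prod>i\<in>S. eval_poly (F i) g)"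
  by (induction S rule: infinite_finite_induct) (auto simp: eval_mult)

definition Xv :: "nat \<Rightarrow> mpoly" where
  "Xv i = Poly_Mapping.single (Poly_Mapping.single i 1) 1"

lemma eval_Xv[simp]: "eval_poly (Xv i) g = g i"
  by (simp add: Xv_def eval_single monev_single)

lemma eval_cong:
  "(\<And>mon i. mon \<in> Poly_Mapping.keys P \<Longrightarrow> i \<in> Poly_Mapping.keys mon \<Longrightarrow> g i = h i) \<Longrightarrow> eval_poly P g = eval_poly P h"
  unfolding eval_poly_def monev_def[symmetric]
  by (rule sum.cong[OF refl]) (metis monev_cong)

lemma eval_cong_in:
  "poly_in A P \<Longrightarrow> (\<And>i. i \<in> A \<Longrightarrow> g i = h i) \<Longrightarrow> eval_poly P g = eval_poly P h"
  unfolding poly_in_def by (rule eval_cong) auto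



lemma keys_add_nat: "Poly_Mapping.keys (a + b) \<subseteq> Poly_Mapping.keys a \<union> Poly_Mapping.keys (b :: nat \<Rightarrow>\<^sub>0 nat)"
  by (rule keys_add)

lemma poly_in_0[simp]: "poly_in A 0" by (simp add: poly_in_def)
lemma poly_in_1[simp]: "poly_in A 1" by (simp add: poly_in_def)
lemma poly_in_add: "poly_in A P \<Longrightarrow> poly_in A Q \<Longrightarrow> poly_in A (P + Q)"
  unfolding poly_in_def
proof
  fix mon assume a: "\<forall>mon\<in>Poly_Mapping.keys P. Poly_Mapping.keys mon \<subseteq> A"
    "\<forall>mon\<in>Poly_Mapping.keys Q. Poly_Mapping.keys mon \<subseteq> A" and m: "mon \<in> Poly_Mapping.keys (P + Q)"
  have "mon \<in> Poly_Mapping.keys P \<union> Poly_Mapping.keys Q" using m keys_add[of P Q] by (rule subsetD[rotated])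
  then show "Poly_Mapping.keys mon \<subseteq> A" using a by (elim UnE) simp_all
qed
lemma poly_in_mult: "poly_in A P \<Longrightarrow> poly_in A Q \<Longrightarrow> poly_in A (P * Q)"
  unfolding poly_in_def
proof
  fix mon assume a: "\<forall>mon\<in>Poly_Mapping.keys P. Poly_Mapping.keys mon \<subseteq> A"
    "\<forall>mon\<in>Poly_Mapping.keys Q. Poly_Mapping.keys mon \<subseteq> A" and m: "mon \<in> Poly_Mapping.keys (P * Q)"
  have "mon \<in> {a + b | a b. a \<in> Poly_Mapping.keys P \<and> b \<in> Poly_Mapping.keys Q}"
    using m keys_mult[of P Q] by (rule subsetD[rotated])
  then obtain a b where ab: "mon = a + b" "a \<in> Poly_Mapping.keys P" "b \<in> Poly_Mapping.keys Q"
    by (elim CollectE exE conjE)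
  have "Poly_Mapping.keys a \<subseteq> A" "Poly_Mapping.keys b \<subseteq> A" using a ab by simp_all
  then show "Poly_Mapping.keys mon \<subseteq> A" unfolding ab(1) using keys_add_nat[of a b] by (meson Un_least order_trans)
qed
lemma poly_in_Xv: "i \<in> A \<Longrightarrow> poly_in A (Xv i)" by (simp add: poly_in_def Xv_def)
lemma poly_in_single: "Poly_Mapping.keys a \<subseteq> A \<Longrightarrow> poly_in A (Poly_Mapping.single a c)"
  by (simp add: poly_in_def)
lemma poly_in_power: "poly_in A P \<Longrightarrow> poly_in A (P ^ e)"
  by (induction e) (simp_all add: poly_in_mult)
lemma poly_in_prod: "(\<And>i. i \<in> S \<Longrightarrow> poly_in A (F i)) \<Longrightarrow> poly_in A (\<Prod>i\<in>S. F i)"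
  by (induction S rule: infinite_finite_induct) (simp_all add: poly_in_mult)
lemma poly_in_sum: "(\<And>i. i \<in> S \<Longrightarrow> poly_in A (F i)) \<Longrightarrow> poly_in A (\<Sum>i\<in>S. F i)"
  by (induction S rule: infinite_finite_induct) (simp_all add: poly_in_add)
lemma poly_in_mono: "poly_in A P \<Longrightarrow> A \<subseteq> B \<Longrightarrow> poly_in B P"
  unfolding poly_in_def by blast

lemma Xv_power: "Xv i ^ e = Poly_Mapping.single (Poly_Mapping.single i e) 1"
proof (induction e)
  case 0 then show ?case by simp
next
  case (Suc e) then show ?case by (simp add: Xv_def mult_single single_add[symmetric])
qed

lemma prod_single1: "(\<Prod>i\<in>S. Poly_Mapping.single (F i) (1::rat)) = Poly_Mapping.single (\<Sum>i\<in>S. F i) 1"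
  by (induction S rule: infinite_finite_induct) (auto simp: mult_single)

lemma Xv_prod_power: "(\<Prod>i\<in>S. Xv i ^ F i) = Poly_Mapping.single (\<Sum>i\<in>S. Poly_Mapping.single i (F i)) 1"
  by (simp add: Xv_power prod_single1)

lemma var_Fract: "var i = Fract (Xv i) 1" by (simp add: var_def Xv_def)

lemma Fract1_mult: "Fract a 1 * Fract b 1 = Fract (a * b) (1::mpoly)" by simp
lemma Fract1_add: "Fract a 1 + Fract b 1 = Fract (a + b) (1::mpoly)" by simp
lemma Fract1_power: "Fract a 1 ^ e = Fract (a ^ e) (1::mpoly)"
  by (induction e) (auto simp: One_fract_def)
lemma Fract1_prod: "(\<Prod>i\<in>S. Fract (F i) 1) = Fract (\<Prod>i\<in>S. F i) (1::mpoly)"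
  by (induction S rule: infinite_finite_induct) (auto simp: One_fract_def)
lemma Fract1_sum: "(\<Sum>i\<in>S. Fract (F i) 1) = Fract (\<Sum>i\<in>S. F i) (1::mpoly)"
  by (induction S rule: infinite_finite_induct) (auto simp: Zero_fract_def)
lemma Fract1_eq0: "Fract a 1 = 0 \<longleftrightarrow> a = (0::mpoly)"
  by (simp add: Zero_fract_def eq_fract)

lemma eval_var: "eval_poly P var = Fract P 1"
proof -
  have s: "eval_poly (Poly_Mapping.single a c) var = Fract (Poly_Mapping.single a c) 1" for a c
  proof -
    have "eval_poly (Poly_Mapping.single a c) var
       = Fract (Poly_Mapping.single 0 c) 1 * (\<Prod>i\<in>Poly_Mapping.keys a. Fract (Xv i ^ Poly_Mapping.lookup a i) 1)"
      by (simp add: eval_single monev_def const_rf_def var_Fract Fract1_power)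
    also have "\<dots> = Fract (Poly_Mapping.single 0 c * Poly_Mapping.single (\<Sum>i\<in>Poly_Mapping.keys a. Poly_Mapping.single i (Poly_Mapping.lookup a i)) 1) 1"
      by (simp add: Fract1_prod Xv_prod_power)
    also have "\<dots> = Fract (Poly_Mapping.single a c) 1"
      by (simp add: mult_single pm_repr[of a, symmetric])
    finally show ?thesis .
  qed
  have "eval_poly P var = eval_poly (\<Sum>a\<in>Poly_Mapping.keys P. Poly_Mapping.single a (Poly_Mapping.lookup P a)) var"
    by (subst pm_repr[of P]) (rule refl)
  also have "\<dots> = Fract (\<Sum>a\<in>Poly_Mapping.keys P. Poly_Mapping.single a (Poly_Mapping.lookup P a)) 1"
    by (simp add: eval_sum s Fract1_sum)
  also have "\<dots> = Fract P 1" by (simp add: pm_repr[of P, symmetric])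
  finally show ?thesis .
qed

lemma alg_indep_var: "alg_indep A var"
  unfolding alg_indep_def eval_var Fract1_eq0 by blast


lemma Xv_nonzero: "Xv i \<noteq> 0"
proof
  assume "Xv i = 0"
  then have "Poly_Mapping.lookup (Xv i) (Poly_Mapping.single i 1) = 0" by simp
  then show False by (simp add: Xv_def)
qed

lemma var_nonzero: "var i \<noteq> 0"
  unfolding var_Fract Fract1_eq0 by (rule Xv_nonzero)

lemma alg_indep_nonzero: "alg_indep A g \<Longrightarrow> i \<in> A \<Longrightarrow> g i \<noteq> 0"
proof
  assume a: "alg_indep A g" "i \<in> A" "g i = 0"
  have "eval_poly (Xv i) g = 0" using a(3) by simp
  then have "Xv i = 0" using a(1) poly_in_Xv[OF a(2)] unfolding alg_indep_def by blast
  then show False using Xv_nonzero by blast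
qed

lemma alg_indep_cong: "alg_indep A g \<Longrightarrow> (\<And>i. i \<in> A \<Longrightarrow> g i = h i) \<Longrightarrow> alg_indep A h"
proof -
  assume a: "alg_indep A g" "\<And>i. i \<in> A \<Longrightarrow> g i = h i"
  show ?thesis unfolding alg_indep_def
  proof (intro allI impI)
    fix P assume "poly_in A P" "eval_poly P h = 0"
    moreover have "eval_poly P g = eval_poly P h" by (rule eval_cong_in[OF \<open>poly_in A P\<close>]) (rule a(2))
    ultimately show "P = 0" using a(1) unfolding alg_indep_def by auto
  qed
qed

subsection \<open>generated fields\<close>

lemma gen_fieldI: "poly_in A P \<Longrightarrow> poly_in A Q \<Longrightarrow> eval_poly Q g \<noteq> 0 \<Longrightarrow> f = eval_poly P g / eval_poly Q g \<Longrightarrow> f \<in> gen_field A g"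
  unfolding gen_field_def by blast

lemma gen_field_eval: "poly_in A P \<Longrightarrow> eval_poly P g \<in> gen_field A g"
  by (rule gen_fieldI[of A P 1]) auto

lemma gen_field_gen: "i \<in> A \<Longrightarrow> g i \<in> gen_field A g"
  using gen_field_eval[OF poly_in_Xv, of i A g] by simp

lemma gen_field_add: "f \<in> gen_field A g \<Longrightarrow> h \<in> gen_field A g \<Longrightarrow> f + h \<in> gen_field A g"
proof -
  assume "f \<in> gen_field A g" "h \<in> gen_field A g"
  then obtain P Q P' Q' where a: "poly_in A P" "poly_in A Q" "eval_poly Q g \<noteq> 0" "f = eval_poly P g / eval_poly Q g"
    "poly_in A P'" "poly_in A Q'" "eval_poly Q' g \<noteq> 0" "h = eval_poly P' g / eval_poly Q' g"
    unfolding gen_field_def by blast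
  show ?thesis
    by (rule gen_fieldI[of A "P*Q' + P'*Q" "Q*Q'"]) (use a in \<open>auto intro!: poly_in_add poly_in_mult simp: eval_add eval_mult add_frac_eq\<close>)
qed

lemma gen_field_mult: "f \<in> gen_field A g \<Longrightarrow> h \<in> gen_field A g \<Longrightarrow> f * h \<in> gen_field A g"
proof -
  assume "f \<in> gen_field A g" "h \<in> gen_field A g"
  then obtain P Q P' Q' where a: "poly_in A P" "poly_in A Q" "eval_poly Q g \<noteq> 0" "f = eval_poly P g / eval_poly Q g"
    "poly_in A P'" "poly_in A Q'" "eval_poly Q' g \<noteq> 0" "h = eval_poly P' g / eval_poly Q' g"
    unfolding gen_field_def by blast
  show ?thesis
    by (rule gen_fieldI[of A "P*P'" "Q*Q'"]) (use a in \<open>auto intro!: poly_in_mult simp: eval_mult\<close>)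
qed

lemma gen_field_divide: "f \<in> gen_field A g \<Longrightarrow> h \<in> gen_field A g \<Longrightarrow> f / h \<in> gen_field A g"
proof -
  assume "f \<in> gen_field A g" "h \<in> gen_field A g"
  then obtain P Q P' Q' where a: "poly_in A P" "poly_in A Q" "eval_poly Q g \<noteq> 0" "f = eval_poly P g / eval_poly Q g"
    "poly_in A P'" "poly_in A Q'" "eval_poly Q' g \<noteq> 0" "h = eval_poly P' g / eval_poly Q' g"
    unfolding gen_field_def by blast
  show ?thesis
  proof (cases "eval_poly P' g = 0")
    case True
    then have "h = 0" using a by simp
    then have "f / h = eval_poly 0 g" by simp
    then show ?thesis using gen_field_eval[of A 0 g] by (simp only: poly_in_0)
  next
    case False
    show ?thesis
      by (rule gen_fieldI[of A "P*Q'" "Q*P'"]) (use a False in \<open>auto intro!: poly_in_mult simp: eval_mult\<close>)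
  qed
qed

lemma gen_field_power: "f \<in> gen_field A g \<Longrightarrow> f ^ e \<in> gen_field A g"
  by (induction e) (auto intro: gen_field_mult gen_field_eval[of A 1, simplified])

lemma gen_field_prod: "(\<And>i. i \<in> S \<Longrightarrow> F i \<in> gen_field A g) \<Longrightarrow> (\<Prod>i\<in>S. F i) \<in> gen_field A g"
  by (induction S rule: infinite_finite_induct) (auto intro: gen_field_mult gen_field_eval[of A 1, simplified])

lemma gen_field_sum: "(\<And>i. i \<in> S \<Longrightarrow> F i \<in> gen_field A g) \<Longrightarrow> (\<Sum>i\<in>S. F i) \<in> gen_field A g"
  by (induction S rule: infinite_finite_induct) (auto intro: gen_field_add gen_field_eval[of A 0, simplified])

lemma gen_field_const: "const_rf c \<in> gen_field A g"
  using gen_field_eval[of A "Poly_Mapping.single 0 c" g] by (simp add: eval_single poly_in_def)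

lemma gen_field_eval_sub:
  assumes h: "\<And>i. i \<in> A' \<Longrightarrow> h i \<in> gen_field A g" and P: "poly_in A' P"
  shows "eval_poly P h \<in> gen_field A g"
proof -
  have eq: "eval_poly P h = (\<Sum>mon\<in>Poly_Mapping.keys P. const_rf (Poly_Mapping.lookup P mon) *
     (\<Prod>i \<in> Poly_Mapping.keys mon. h i ^ Poly_Mapping.lookup mon i))"
    by (simp add: eval_poly_def)
  show ?thesis unfolding eq
  proof (rule gen_field_sum, rule gen_field_mult[OF gen_field_const], rule gen_field_prod, rule gen_field_power)
    fix mon i assume "mon \<in> Poly_Mapping.keys P" "i \<in> Poly_Mapping.keys mon"
    then have "i \<in> A'" using P unfolding poly_in_def by blast
    then show "h i \<in> gen_field A g" by (rule h)
  qed
qed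

lemma gen_field_sub:
  assumes "\<And>i. i \<in> A' \<Longrightarrow> h i \<in> gen_field A g"
  shows "gen_field A' h \<subseteq> gen_field A g"
proof
  fix f assume "f \<in> gen_field A' h"
  then obtain P Q where a: "poly_in A' P" "poly_in A' Q" "f = eval_poly P h / eval_poly Q h"
    unfolding gen_field_def by blast
  show "f \<in> gen_field A g" unfolding a(3)
    by (rule gen_field_divide[OF gen_field_eval_sub[OF assms a(1)] gen_field_eval_sub[OF assms a(2)]])
qed

lemma gen_field_cong: "(\<And>i. i \<in> A \<Longrightarrow> g i = h i) \<Longrightarrow> gen_field A g = gen_field A h"
proof -
  assume e: "\<And>i. i \<in> A \<Longrightarrow> g i = h i"
  show ?thesis
  proof (rule equalityI)
    show "gen_field A g \<subseteq> gen_field A h"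
      by (rule gen_field_sub) (simp add: e gen_field_gen)
    show "gen_field A h \<subseteq> gen_field A g"
      by (rule gen_field_sub) (simp add: e[symmetric] gen_field_gen)
  qed
qed



definition khom :: "nat \<Rightarrow> nat \<Rightarrow> mpoly \<Rightarrow> bool" where
  "khom k e Q \<longleftrightarrow> (\<forall>\<kappa>\<in>Poly_Mapping.keys Q. Poly_Mapping.lookup \<kappa> k = e)"

lemma khom_single: "Poly_Mapping.lookup \<kappa> k = e \<Longrightarrow> khom k e (Poly_Mapping.single \<kappa> c)"
  by (simp add: khom_def)

lemma khom_0: "khom k e 0" by (simp add: khom_def)

lemma khom_add: "khom k e P \<Longrightarrow> khom k e Q \<Longrightarrow> khom k e (P + Q)"
  unfolding khom_def
proof
  fix mon assume a: "\<forall>\<kappa>\<in>Poly_Mapping.keys P. Poly_Mapping.lookup \<kappa> k = e"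
    "\<forall>\<kappa>\<in>Poly_Mapping.keys Q. Poly_Mapping.lookup \<kappa> k = e" and m: "mon \<in> Poly_Mapping.keys (P + Q)"
  have "mon \<in> Poly_Mapping.keys P \<union> Poly_Mapping.keys Q" using m keys_add[of P Q] by (rule subsetD[rotated])
  then show "Poly_Mapping.lookup mon k = e" using a by (elim UnE) simp_all
qed

lemma khom_sum: "(\<And>i. i \<in> S \<Longrightarrow> khom k e (F i)) \<Longrightarrow> khom k e (\<Sum>i\<in>S. F i)"
  by (induction S rule: infinite_finite_induct) (simp_all add: khom_add khom_0)

lemma khom_mult: "khom k e P \<Longrightarrow> khom k f Q \<Longrightarrow> khom k (e + f) (P * Q)"
  unfolding khom_def
proof
  fix mon assume a: "\<forall>\<kappa>\<in>Poly_Mapping.keys P. Poly_Mapping.lookup \<kappa> k = e"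
    "\<forall>\<kappa>\<in>Poly_Mapping.keys Q. Poly_Mapping.lookup \<kappa> k = f" and m: "mon \<in> Poly_Mapping.keys (P * Q)"
  have "mon \<in> {a + b | a b. a \<in> Poly_Mapping.keys P \<and> b \<in> Poly_Mapping.keys Q}"
    using m keys_mult[of P Q] by (rule subsetD[rotated])
  then obtain a b where ab: "mon = a + b" "a \<in> Poly_Mapping.keys P" "b \<in> Poly_Mapping.keys Q"
    by (elim CollectE exE conjE)
  then show "Poly_Mapping.lookup mon k = e + f" using a by (simp add: lookup_add)
qed

lemma khom_1: "khom k 0 1" by (simp add: khom_def)

lemma khom_power0: "khom k 0 P \<Longrightarrow> khom k 0 (P ^ d)"
  by (induction d) (simp_all add: khom_1 khom_mult[of k 0 P 0, simplified])

lemma khom_poly_in: "poly_in A U \<Longrightarrow> k \<notin> A \<Longrightarrow> khom k 0 U"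
  unfolding khom_def poly_in_def
proof (intro ballI)
  fix \<kappa> assume "\<forall>mon\<in>Poly_Mapping.keys U. Poly_Mapping.keys mon \<subseteq> A" "k \<notin> A" "\<kappa> \<in> Poly_Mapping.keys U"
  then have "k \<notin> Poly_Mapping.keys \<kappa>" by blast
  then show "Poly_Mapping.lookup \<kappa> k = 0" by (simp add: in_keys_iff)
qed

lemma khom_sum_zero:
  assumes fin: "finite D" and hom: "\<And>d. d \<in> D \<Longrightarrow> khom k (h d) (Q d)" and inj: "inj_on h D"
    and z: "(\<Sum>d\<in>D. Q d) = 0" and d0: "d0 \<in> D"
  shows "Q d0 = 0"
proof (rule ccontr)
  assume "Q d0 \<noteq> 0"
  then obtain \<kappa> where \<kappa>: "\<kappa> \<in> Poly_Mapping.keys (Q d0)"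
    by (metis keys_eq_empty equals0I)
  have "0 = Poly_Mapping.lookup (\<Sum>d\<in>D. Q d) \<kappa>" by (simp add: z)
  also have "\<dots> = (\<Sum>d\<in>D. Poly_Mapping.lookup (Q d) \<kappa>)" by (simp add: lookup_sum)
  also have "\<dots> = Poly_Mapping.lookup (Q d0) \<kappa> + (\<Sum>d\<in>D - {d0}. Poly_Mapping.lookup (Q d) \<kappa>)"
    using fin d0 by (simp add: sum.remove)
  also have "(\<Sum>d\<in>D - {d0}. Poly_Mapping.lookup (Q d) \<kappa>) = 0"
  proof (rule sum.neutral, rule ballI)
    fix d assume d: "d \<in> D - {d0}"
    show "Poly_Mapping.lookup (Q d) \<kappa> = 0"
    proof (rule ccontr)
      assume "Poly_Mapping.lookup (Q d) \<kappa> \<noteq> 0"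
      then have "\<kappa> \<in> Poly_Mapping.keys (Q d)" by (simp add: in_keys_iff)
      then have "Poly_Mapping.lookup \<kappa> k = h d" using hom d unfolding khom_def by blast
      moreover have "Poly_Mapping.lookup \<kappa> k = h d0" using hom d0 \<kappa> unfolding khom_def by blast
      ultimately have "d = d0" using inj d d0 unfolding inj_on_def by auto
      then show False using d by simp
    qed
  qed
  finally have "Poly_Mapping.lookup (Q d0) \<kappa> = 0" by simp
  then show False using \<kappa> by (simp add: in_keys_iff)
qed

definition restk :: "nat \<Rightarrow> (nat \<Rightarrow>\<^sub>0 nat) \<Rightarrow> (nat \<Rightarrow>\<^sub>0 nat)" where
  "restk k mon = Poly_Mapping.update k 0 mon"

lemma lookup_restk: "Poly_Mapping.lookup (restk k mon) i = (if i = k then 0 else Poly_Mapping.lookup mon i)"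
  by (simp add: restk_def lookup_update)

lemma keys_restk: "Poly_Mapping.keys (restk k mon) = Poly_Mapping.keys mon - {k}"
  by (simp add: restk_def keys_update)

lemma restk_decomp: "mon = restk k mon + Poly_Mapping.single k (Poly_Mapping.lookup mon k)"
  by (rule poly_mapping_eqI) (simp add: lookup_add lookup_restk lookup_single when_def)

lemma keys_restk_single_sub:
  "Poly_Mapping.keys (restk k mon + Poly_Mapping.single k e) \<subseteq> (Poly_Mapping.keys mon - {k}) \<union> {k}"
proof -
  have "Poly_Mapping.keys (restk k mon + Poly_Mapping.single k e) \<subseteq> Poly_Mapping.keys (restk k mon) \<union> Poly_Mapping.keys (Poly_Mapping.single k e)"
    by (rule keys_add)
  also have "\<dots> \<subseteq> (Poly_Mapping.keys mon - {k}) \<union> {k}" by (auto simp: keys_restk)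
  finally show ?thesis .
qed

lemma mutation_indep:
  assumes ind: "alg_indep A g" and kA: "k \<in> A" and U0: "U \<noteq> 0" and Uin: "poly_in (A - {k}) U"
    and same: "\<And>i. i \<in> A - {k} \<Longrightarrow> g' i = g i" and rel: "g k * g' k = eval_poly U g"
  shows "alg_indep A g'"
  unfolding alg_indep_def
proof (intro allI impI)
  fix P assume Pin: "poly_in A P" and P0: "eval_poly P g' = 0"
  show "P = 0"
  proof (rule ccontr)
    assume Pne: "P \<noteq> 0"
    have gk: "g k \<noteq> 0" by (rule alg_indep_nonzero[OF ind kA])
    define K where "K = Poly_Mapping.keys P"
    have finK: "finite K" by (simp add: K_def)
    define dg where "dg mon = Poly_Mapping.lookup mon k" for mon :: "nat \<Rightarrow>\<^sub>0 nat"
    define D where "D = dg ` K"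
    have finD: "finite D" using finK by (simp add: D_def)
    define N where "N = Max D"
    have dN: "dg mon \<le> N" if "mon \<in> K" for mon
      unfolding N_def using finD that by (simp add: D_def)
    define S where "S mon = Poly_Mapping.single (restk k mon + Poly_Mapping.single k (N - dg mon)) (Poly_Mapping.lookup P mon)" for mon
    define Pt where "Pt = (\<Sum>mon\<in>K. S mon * U ^ dg mon)"
    have UinA: "poly_in A U" using Uin by (rule poly_in_mono) blast
    have Ptin: "poly_in A Pt"
      unfolding Pt_def
    proof (rule poly_in_sum, rule poly_in_mult)
      fix mon assume m: "mon \<in> K"
      have "Poly_Mapping.keys mon \<subseteq> A" using Pin m unfolding poly_in_def K_def by blast
      then have "Poly_Mapping.keys (restk k mon + Poly_Mapping.single k (N - dg mon)) \<subseteq> A"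
        using keys_restk_single_sub[of k mon "N - dg mon"] kA by blast
      then show "poly_in A (S mon)" unfolding S_def by (rule poly_in_single)
      show "poly_in A (U ^ dg mon)" using UinA by (rule poly_in_power)
    qed
    have evS: "eval_poly (S mon * U ^ dg mon) g = g k ^ N * (const_rf (Poly_Mapping.lookup P mon) * monev mon g')"
      if m: "mon \<in> K" for mon
    proof -
      have km: "Poly_Mapping.keys mon \<subseteq> A" using Pin m unfolding poly_in_def K_def by blast
      have mr: "monev (restk k mon) g' = monev (restk k mon) g"
        by (rule monev_cong) (use km in \<open>auto simp: keys_restk intro!: same\<close>)
      have "monev mon g' = monev (restk k mon) g' * g' k ^ dg mon"
        by (subst restk_decomp[of mon k]) (simp add: monev_add monev_single dg_def)
      then have mg': "monev mon g' = monev (restk k mon) g * g' k ^ dg mon" using mr by simp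
      have Nd: "N = (N - dg mon) + dg mon" using dN[OF m] by simp
      have "eval_poly (S mon * U ^ dg mon) g = const_rf (Poly_Mapping.lookup P mon) * (monev (restk k mon) g * g k ^ (N - dg mon)) * (g k * g' k) ^ dg mon"
        by (simp add: S_def eval_mult eval_single eval_power monev_add monev_single rel)
      also have "\<dots> = (g k ^ (N - dg mon) * g k ^ dg mon) * (const_rf (Poly_Mapping.lookup P mon) * (monev (restk k mon) g * g' k ^ dg mon))"
        by (simp add: power_mult_distrib mult_ac)
      also have "g k ^ (N - dg mon) * g k ^ dg mon = g k ^ N"
        by (simp add: power_add[symmetric] dN[OF m])
      finally show ?thesis using mg' by simp
    qed
    have "eval_poly Pt g = (\<Sum>mon\<in>K. g k ^ N * (const_rf (Poly_Mapping.lookup P mon) * monev mon g'))"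
      unfolding Pt_def eval_sum by (rule sum.cong) (simp_all add: evS)
    also have "\<dots> = g k ^ N * eval_poly P g'"
      by (simp add: eval_poly_def monev_def K_def sum_distrib_left)
    finally have "eval_poly Pt g = 0" using P0 by simp
    then have Pt0: "Pt = 0" using ind Ptin unfolding alg_indep_def by blast
    define Q where "Q d = (\<Sum>mon\<in>{x \<in> K. dg x = d}. S mon) * U ^ d" for d
    have "Pt = (\<Sum>d\<in>D. \<Sum>mon\<in>{x \<in> K. dg x = d}. S mon * U ^ dg mon)"
      unfolding Pt_def D_def by (rule sum.image_gen[OF finK])
    also have "\<dots> = (\<Sum>d\<in>D. Q d)"
      unfolding Q_def sum_distrib_right by (rule sum.cong[OF refl], rule sum.cong) auto
    finally have sumQ: "(\<Sum>d\<in>D. Q d) = 0" using Pt0 by simp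
    have U0k: "khom k 0 U" using Uin by (rule khom_poly_in) simp
    have homQ: "khom k (N - d) (Q d)" if "d \<in> D" for d
    proof -
      have "khom k (N - d) (\<Sum>mon\<in>{x \<in> K. dg x = d}. S mon)"
        by (rule khom_sum) (auto simp: S_def intro!: khom_single simp: lookup_add lookup_restk)
      then show ?thesis unfolding Q_def using khom_mult[OF _ khom_power0[OF U0k, of d]] by simp
    qed
    have injD: "inj_on (\<lambda>d. N - d) D"
    proof (rule inj_onI)
      fix d d' assume "d \<in> D" "d' \<in> D" "N - d = N - d'"
      moreover have "d \<le> N" "d' \<le> N" using \<open>d \<in> D\<close> \<open>d' \<in> D\<close> dN unfolding D_def by auto
      ultimately show "d = d'" by simp
    qed
    obtain mon0 where m0: "mon0 \<in> K" using Pne unfolding K_def by (metis keys_eq_empty equals0I)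
    define d0 where "d0 = dg mon0"
    have d0D: "d0 \<in> D" unfolding D_def d0_def using m0 by simp
    have "Q d0 = 0" by (rule khom_sum_zero[OF finD homQ injD sumQ d0D])
    moreover have "U ^ d0 \<noteq> 0" using U0 by simp
    ultimately have S0: "(\<Sum>mon\<in>{x \<in> K. dg x = d0}. S mon) = 0" unfolding Q_def
      using mult_eq_0_iff by blast
    define \<kappa> where "\<kappa> = restk k mon0 + Poly_Mapping.single k (N - d0)"
    have "0 = Poly_Mapping.lookup (\<Sum>mon\<in>{x \<in> K. dg x = d0}. S mon) \<kappa>" by (simp add: S0)
    also have "\<dots> = (\<Sum>mon\<in>{x \<in> K. dg x = d0}. (Poly_Mapping.lookup P mon when restk k mon + Poly_Mapping.single k (N - d0) = \<kappa>))"
      by (simp add: lookup_sum S_def lookup_single)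
    also have "\<dots> = (\<Sum>mon\<in>{x \<in> K. dg x = d0}. (if mon = mon0 then Poly_Mapping.lookup P mon else 0))"
    proof (rule sum.cong[OF refl])
      fix mon assume "mon \<in> {x \<in> K. dg x = d0}"
      then have dm: "dg mon = d0" by simp
      have "restk k mon + Poly_Mapping.single k (N - d0) = \<kappa> \<longleftrightarrow> mon = mon0"
      proof
        assume "restk k mon + Poly_Mapping.single k (N - d0) = \<kappa>"
        then have "restk k mon = restk k mon0" unfolding \<kappa>_def by simp
        then show "mon = mon0"
          using restk_decomp[of mon k] restk_decomp[of mon0 k] dm d0_def unfolding dg_def by metis
      qed (simp add: \<kappa>_def)
      then show "(Poly_Mapping.lookup P mon when restk k mon + Poly_Mapping.single k (N - d0) = \<kappa>) =
        (if mon = mon0 then Poly_Mapping.lookup P mon else 0)" by (simp add: when_def)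
    qed
    also have "\<dots> = Poly_Mapping.lookup P mon0"
      using finK m0 by (simp add: sum.delta d0_def)
    finally have "Poly_Mapping.lookup P mon0 = 0" by simp
    then show False using m0 unfolding K_def by (simp add: in_keys_iff)
  qed
qed

lemma mutation_gen:
  assumes ind: "alg_indep A g" and kA: "k \<in> A" and U0: "U \<noteq> 0" and Uin: "poly_in (A - {k}) U"
    and same: "\<And>i. i \<in> A - {k} \<Longrightarrow> g' i = g i" and rel: "g k * g' k = eval_poly U g"
  shows "gen_field A g' = gen_field A g"
proof -
  have gk: "g k \<noteq> 0" by (rule alg_indep_nonzero[OF ind kA])
  have UinA: "poly_in A U" using Uin by (rule poly_in_mono) blast
  have eU: "eval_poly U g \<noteq> 0" using ind UinA U0 unfolding alg_indep_def by blast
  have eU': "eval_poly U g' = eval_poly U g" by (rule eval_cong_in[OF Uin]) (rule same)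
  have g'k: "g' k \<noteq> 0" using rel eU by auto
  show ?thesis
  proof (rule equalityI; rule gen_field_sub)
    fix i assume i: "i \<in> A"
    show "g' i \<in> gen_field A g"
    proof (cases "i = k")
      case True
      have "g' k = eval_poly U g / g k" using rel gk by (simp add: field_simps)
      also have "\<dots> \<in> gen_field A g" by (rule gen_field_divide[OF gen_field_eval[OF UinA] gen_field_gen[OF kA]])
      finally show ?thesis using True by simp
    next
      case False
      then show ?thesis using same[of i] i gen_field_gen[OF i, of g] by simp
    qed
    show "g i \<in> gen_field A g'"
    proof (cases "i = k")
      case True
      have "g k = eval_poly U g' / g' k" using rel g'k eU' by (simp add: field_simps)
      also have "\<dots> \<in> gen_field A g'" by (rule gen_field_divide[OF gen_field_eval[OF UinA] gen_field_gen[OF kA]])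
      finally show ?thesis using True by simp
    next
      case False
      then show ?thesis using same[of i] i gen_field_gen[OF i, of g'] by simp
    qed
  qed
qed



subsection \<open>subtraction-free expressions\<close>

lemma sf_one: "1 \<le> M \<Longrightarrow> (1::rfun) \<in> sf M"
proof -
  assume a: "1 \<le> M"
  have h: "var 1 \<in> sf M" by (rule sf.sf_var) (use a in simp)
  have "var 1 / var 1 \<in> sf M" by (rule sf.sf_div[OF h h])
  then show ?thesis using var_nonzero[of 1] by simp
qed

lemma sf_power: "1 \<le> M \<Longrightarrow> f \<in> sf M \<Longrightarrow> f ^ e \<in> sf M"
  by (induction e) (simp_all add: sf_one sf_mult)

lemma sf_inv: "1 \<le> M \<Longrightarrow> f \<in> sf M \<Longrightarrow> 1 / f \<in> sf M"
  by (rule sf_div) (simp_all add: sf_one)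

lemma sf_powi: "1 \<le> M \<Longrightarrow> f \<in> sf M \<Longrightarrow> f powi z \<in> sf M"
  unfolding power_int_def using sf_power sf_inv by (simp add: inverse_eq_divide)

lemma sf_prod: "1 \<le> M \<Longrightarrow> (\<And>i. i \<in> S \<Longrightarrow> F i \<in> sf M) \<Longrightarrow> (\<Prod>i\<in>S. F i) \<in> sf M"
  by (induction S rule: infinite_finite_induct) (simp_all add: sf_one sf_mult)

lemma sf_lm: "1 \<le> M \<Longrightarrow> laurent_mono n M e \<in> sf M"
  unfolding laurent_mono_def by (rule sf_prod) (auto intro!: sf_powi sf_var)

subsection \<open>Laurent monomials\<close>

lemma lm_nonzero: "laurent_mono n M e \<noteq> 0"
  unfolding laurent_mono_def by (simp add: var_nonzero)

lemma lm_add: "laurent_mono n M (\<lambda>l. e l + f l) = laurent_mono n M e * laurent_mono n M f"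
  unfolding laurent_mono_def by (simp add: power_int_add var_nonzero prod.distrib)

lemma lm_zero: "laurent_mono n M (\<lambda>_. 0) = 1"
  unfolding laurent_mono_def by simp

lemma prod_powi: "(\<Prod>i\<in>S. (F i :: rfun) powi z) = (\<Prod>i\<in>S. F i) powi z"
  by (induction S rule: infinite_finite_induct) (simp_all add: power_int_mult_distrib)

lemma lm_scale: "laurent_mono n M (\<lambda>l. z * e l) = laurent_mono n M e powi z"
  unfolding laurent_mono_def prod_powi[symmetric]
  by (rule prod.cong[OF refl]) (simp add: power_int_mult[symmetric] mult.commute)

lemma lm_sum: "laurent_mono n M (\<lambda>l. \<Sum>i\<in>S. F i l) = (\<Prod>i\<in>S. laurent_mono n M (F i))"
proof (induction S rule: infinite_finite_induct)
  case (infinite S) then show ?case by (simp add: lm_zero)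
next
  case empty then show ?case by (simp add: lm_zero)
next
  case (insert a S)
  then show ?case by (simp add: lm_add)
qed

lemma lm_cong: "(\<And>l. l \<in> {n+1..M} \<Longrightarrow> e l = f l) \<Longrightarrow> laurent_mono n M e = laurent_mono n M f"
  unfolding laurent_mono_def by (rule prod.cong) auto

lemma lm_neg: "laurent_mono n M (\<lambda>l. - e l) = 1 / laurent_mono n M e"
proof -
  have "laurent_mono n M (\<lambda>l. - e l) * laurent_mono n M e = laurent_mono n M (\<lambda>l. - e l + e l)"
    by (rule lm_add[symmetric])
  also have "\<dots> = 1" by (simp add: lm_zero[unfolded laurent_mono_def] laurent_mono_def)
  finally show ?thesis using lm_nonzero[of n M e] by (simp add: field_simps)
qed

lemma lm_diff: "laurent_mono n M (\<lambda>l. e l - f l) = laurent_mono n M e / laurent_mono n M f"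
proof -
  have "laurent_mono n M (\<lambda>l. e l - f l) = laurent_mono n M (\<lambda>l. e l + - f l)" by simp
  also have "\<dots> = laurent_mono n M e / laurent_mono n M f" by (subst lm_add) (simp add: lm_neg)
  finally show ?thesis .
qed



locale ctx =
  fixes n m mbar :: nat
    and \<phi> :: "rfun \<Rightarrow> trop" and \<psi> :: "rfun \<Rightarrow> rfun"
    and x :: "nat list \<Rightarrow> nat \<Rightarrow> rfun" and y :: "nat list \<Rightarrow> nat \<Rightarrow> trop"
    and B :: "nat list \<Rightarrow> nat \<Rightarrow> nat \<Rightarrow> int"
  assumes n0: "0 < n" and nm: "n \<le> m" and nmb: "n \<le> mbar"
    and hom_phi: "sf_hom_trop m n mbar \<phi>"
    and hom_psi: "sf_hom m mbar \<psi>"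
    and psi_low: "\<forall>i \<in> {1..n}. \<psi> (var i) = var i * laurent_mono n mbar (\<phi> (var i))"
    and psi_high: "\<forall>i \<in> {n+1..m}. \<psi> (var i) = laurent_mono n mbar (\<phi> (var i))"
    and pattern: "seed_pattern n m x y B"
    and initial: "\<forall>i \<in> {1..n}. x [] i = var i"
begin

abbreviation "Mb \<equiv> laurent_mono n mbar"
abbreviation "Lm \<equiv> laurent_mono n m"

lemma m1: "1 \<le> m" using n0 nm by simp
lemma mb1: "1 \<le> mbar" using n0 nmb by simp

lemma one_sf: "1 \<in> sf m" by (rule sf_one[OF m1])

lemma phi_mult: "f \<in> sf m \<Longrightarrow> g \<in> sf m \<Longrightarrow> \<phi> (f * g) l = \<phi> f l + \<phi> g l"
  using hom_phi unfolding sf_hom_trop_def trop_mult_def by simp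

lemma phi_add: "f \<in> sf m \<Longrightarrow> g \<in> sf m \<Longrightarrow> \<phi> (f + g) l = min (\<phi> f l) (\<phi> g l)"
  using hom_phi unfolding sf_hom_trop_def trop_add_def by simp

lemma phi_trop: "f \<in> sf m \<Longrightarrow> \<phi> f \<in> trop_set n mbar"
  using hom_phi unfolding sf_hom_trop_def by simp

lemma phi_one: "\<phi> 1 l = 0"
  using phi_mult[OF one_sf one_sf, of l] by simp

lemma phi_power: "f \<in> sf m \<Longrightarrow> \<phi> (f ^ e) l = int e * \<phi> f l"
  by (induction e) (simp_all add: phi_one phi_mult sf_power[OF m1] algebra_simps)

lemma phi_inv: "f \<in> sf m \<Longrightarrow> f \<noteq> 0 \<Longrightarrow> \<phi> (1 / f) l = - \<phi> f l"
proof -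
  assume f: "f \<in> sf m" "f \<noteq> 0"
  have "\<phi> (1 / f * f) l = \<phi> (1/f) l + \<phi> f l" by (rule phi_mult[OF sf_inv[OF m1 f(1)] f(1)])
  then show ?thesis using f(2) phi_one[of l] by simp
qed

lemma phi_div: "f \<in> sf m \<Longrightarrow> g \<in> sf m \<Longrightarrow> g \<noteq> 0 \<Longrightarrow> \<phi> (f / g) l = \<phi> f l - \<phi> g l"
proof -
  assume a: "f \<in> sf m" "g \<in> sf m" "g \<noteq> 0"
  have "\<phi> (f * (1 / g)) l = \<phi> f l + \<phi> (1/g) l" by (rule phi_mult[OF a(1) sf_inv[OF m1 a(2)]])
  then show ?thesis using phi_inv[OF a(2,3)] by simp
qed

lemma phi_powi: "f \<in> sf m \<Longrightarrow> f \<noteq> 0 \<Longrightarrow> \<phi> (f powi z) l = z * \<phi> f l"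
proof -
  assume f: "f \<in> sf m" "f \<noteq> 0"
  show ?thesis
  proof (cases "z \<ge> 0")
    case True
    then show ?thesis by (simp add: power_int_def phi_power[OF f(1)])
  next
    case False
    then have "f powi z = (1 / f) ^ nat (- z)" by (simp add: power_int_def inverse_eq_divide)
    then show ?thesis using False
      by (simp add: phi_power[OF sf_inv[OF m1 f(1)]] phi_inv[OF f])
  qed
qed

lemma phi_prod: "(\<And>i. i \<in> S \<Longrightarrow> F i \<in> sf m) \<Longrightarrow> \<phi> (\<Prod>i\<in>S. F i) l = (\<Sum>i\<in>S. \<phi> (F i) l)"
proof (induction S rule: infinite_finite_induct)
  case (insert a S)
  then show ?case by (simp add: phi_mult sf_prod[OF m1])
qed (simp_all add: phi_one)

lemma var_sf: "j \<in> {1..m} \<Longrightarrow> var j \<in> sf m" by (rule sf.sf_var)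

lemma phi_lm: "\<phi> (Lm e) l = (\<Sum>j\<in>{n+1..m}. e j * \<phi> (var j) l)"
proof -
  have v: "j \<in> {n+1..m} \<Longrightarrow> var j \<in> sf m" for j by (rule var_sf) simp
  show ?thesis unfolding laurent_mono_def
    by (subst phi_prod) (auto intro!: sf_powi[OF m1] v sum.cong simp: phi_powi var_nonzero v)
qed

lemma psi_mult: "f \<in> sf m \<Longrightarrow> g \<in> sf m \<Longrightarrow> \<psi> (f * g) = \<psi> f * \<psi> g"
  using hom_psi unfolding sf_hom_def by simp

lemma psi_add: "f \<in> sf m \<Longrightarrow> g \<in> sf m \<Longrightarrow> \<psi> (f + g) = \<psi> f + \<psi> g"
  using hom_psi unfolding sf_hom_def by simp

lemma psi_var1: "\<psi> (var 1) \<noteq> 0"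
  using psi_low n0 by (simp add: var_nonzero lm_nonzero)

lemma psi_one: "\<psi> 1 = 1"
proof -
  have v: "var 1 \<in> sf m" using m1 by (intro var_sf) simp
  have "\<psi> (var 1 * 1) = \<psi> (var 1) * \<psi> 1" by (rule psi_mult[OF v one_sf])
  then show ?thesis using psi_var1 by simp
qed

lemma psi_inv: "f \<in> sf m \<Longrightarrow> f \<noteq> 0 \<Longrightarrow> \<psi> (1 / f) = 1 / \<psi> f \<and> \<psi> f \<noteq> 0"
proof -
  assume f: "f \<in> sf m" "f \<noteq> 0"
  have "\<psi> (1 / f * f) = \<psi> (1/f) * \<psi> f" by (rule psi_mult[OF sf_inv[OF m1 f(1)] f(1)])
  then have "\<psi> (1/f) * \<psi> f = 1" using f(2) psi_one by simp
  then show ?thesis by (metis divide_eq_eq mult_zero_right zero_neq_one)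
qed

lemma psi_nonzero: "f \<in> sf m \<Longrightarrow> f \<noteq> 0 \<Longrightarrow> \<psi> f \<noteq> 0"
  using psi_inv by blast

lemma psi_div: "f \<in> sf m \<Longrightarrow> g \<in> sf m \<Longrightarrow> g \<noteq> 0 \<Longrightarrow> \<psi> (f / g) = \<psi> f / \<psi> g"
proof -
  assume a: "f \<in> sf m" "g \<in> sf m" "g \<noteq> 0"
  have "\<psi> (f * (1 / g)) = \<psi> f * \<psi> (1/g)" by (rule psi_mult[OF a(1) sf_inv[OF m1 a(2)]])
  then show ?thesis using psi_inv[OF a(2,3)] by simp
qed

lemma psi_power: "f \<in> sf m \<Longrightarrow> \<psi> (f ^ e) = \<psi> f ^ e"
  by (induction e) (simp_all add: psi_one psi_mult sf_power[OF m1])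

lemma psi_powi: "f \<in> sf m \<Longrightarrow> f \<noteq> 0 \<Longrightarrow> \<psi> (f powi z) = \<psi> f powi z"
proof -
  assume f: "f \<in> sf m" "f \<noteq> 0"
  show ?thesis
  proof (cases "z \<ge> 0")
    case True
    then show ?thesis by (simp add: power_int_def psi_power[OF f(1)])
  next
    case False
    then have "f powi z = (1 / f) ^ nat (- z)" by (simp add: power_int_def inverse_eq_divide)
    then show ?thesis using False psi_inv[OF f]
      by (simp add: psi_power[OF sf_inv[OF m1 f(1)]] power_int_def inverse_eq_divide)
  qed
qed

lemma psi_prod: "(\<And>i. i \<in> S \<Longrightarrow> F i \<in> sf m) \<Longrightarrow> \<psi> (\<Prod>i\<in>S. F i) = (\<Prod>i\<in>S. \<psi> (F i))"
proof (induction S rule: infinite_finite_induct)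
  case (insert a S)
  then show ?case by (simp add: psi_mult sf_prod[OF m1])
qed (simp_all add: psi_one)

lemma psi_lm: "\<psi> (Lm e) = Mb (\<lambda>l. \<Sum>j\<in>{n+1..m}. e j * \<phi> (var j) l)"
proof -
  have "\<psi> (Lm e) = (\<Prod>j\<in>{n+1..m}. \<psi> (var j) powi e j)"
  proof -
    have v: "j \<in> {n+1..m} \<Longrightarrow> var j \<in> sf m" for j by (rule var_sf) simp
    show ?thesis unfolding laurent_mono_def
      by (subst psi_prod) (auto intro!: sf_powi[OF m1] v prod.cong simp: psi_powi var_nonzero v)
  qed
  also have "\<dots> = (\<Prod>j\<in>{n+1..m}. Mb (\<lambda>l. e j * \<phi> (var j) l))"
    by (rule prod.cong[OF refl]) (simp add: psi_high lm_scale)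
  also have "\<dots> = Mb (\<lambda>l. \<Sum>j\<in>{n+1..m}. e j * \<phi> (var j) l)"
    by (rule lm_sum[symmetric])
  finally show ?thesis .
qed

end


lemma tree_Nil: "[] \<in> tree n" by (simp add: tree_def)

lemma tree_snoc: "t0 @ [k] \<in> tree n \<Longrightarrow> tree_edge n t0 k (t0 @ [k])"
  unfolding tree_edge_def tree_def by (auto simp: successively_append_iff)

lemma tree_induct[consumes 1, case_names Nil snoc]:
  assumes "t \<in> tree n" and "P []"
    and "\<And>t0 k. tree_edge n t0 k (t0 @ [k]) \<Longrightarrow> P t0 \<Longrightarrow> P (t0 @ [k])"
  shows "P t"
  using assms(1)
proof (induction t rule: rev_induct)
  case Nil then show ?case using assms(2) by simp
next
  case (snoc k t0)
  have e: "tree_edge n t0 k (t0 @ [k])" by (rule tree_snoc[OF snoc.prems])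
  then have "t0 \<in> tree n" by (simp add: tree_edge_def)
  then show ?case using assms(3)[OF e] snoc.IH by simp
qed

context ctx
begin

definition gx :: "nat list \<Rightarrow> nat \<Rightarrow> rfun" where
  "gx t = (\<lambda>i. if i \<le> n then x t i else var i)"

lemma vertex: "t \<in> tree n \<Longrightarrow>
        (\<forall>i \<in> {1..n}. x t i \<in> ratfield m) \<and>
        alg_indep {1..m} (gx t) \<and>
        gen_field {1..m} (gx t) = ratfield m \<and>
        (\<forall>k \<in> {1..n}. y t k \<in> trop_set n m) \<and>
        skew_symmetrizable n (B t)"
  using pattern unfolding seed_pattern_def gx_def by blast

lemma edge: "tree_edge n t k t' \<Longrightarrow>
        matrix_mutation_rel n k (B t) (B t') \<and>
        y_mutation_rel n k (B t) (y t) (y t') \<and>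
        x_mutation_rel n m k (B t) (y t) (x t) (x t')"
  using pattern unfolding seed_pattern_def by blast

lemma x_nonzero: "t \<in> tree n \<Longrightarrow> i \<in> {1..n} \<Longrightarrow> x t i \<noteq> 0"
proof -
  assume t: "t \<in> tree n" and i: "i \<in> {1..n}"
  have "gx t i \<noteq> 0" by (rule alg_indep_nonzero) (use vertex[OF t] i nm in auto)
  then show ?thesis using i by (simp add: gx_def)
qed

lemma Bkk: "t \<in> tree n \<Longrightarrow> k \<in> {1..n} \<Longrightarrow> B t k k = 0"
proof -
  assume t: "t \<in> tree n" and k: "k \<in> {1..n}"
  obtain d :: "nat \<Rightarrow> int" where d: "\<forall>i \<in> {1..n}. d i > 0" "\<forall>i \<in> {1..n}. \<forall>j \<in> {1..n}. d i * B t i j = - (d j * B t j i)"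
    using vertex[OF t] unfolding skew_symmetrizable_def by blast
  have "d k * B t k k = - (d k * B t k k)" using d(2) k by blast
  then have "d k * B t k k = 0" by simp
  moreover have "d k > 0" using d(1) k by blast
  ultimately show ?thesis by simp
qed

lemma edge_k: "tree_edge n t k t' \<Longrightarrow> k \<in> {1..n} \<and> t \<in> tree n \<and> t' \<in> tree n"
  by (simp add: tree_edge_def)

definition Rnum :: "nat list \<Rightarrow> nat \<Rightarrow> rfun" where
  "Rnum t k = Lm (y t k) * (\<Prod>i \<in> {i \<in> {1..n}. B t i k > 0}. x t i ^ nat (B t i k))
          + (\<Prod>i \<in> {i \<in> {1..n}. B t i k < 0}. x t i ^ nat (- B t i k))"

lemma Rnum_sf: "(\<forall>i\<in>{1..n}. x t i \<in> sf m) \<Longrightarrow> Rnum t k \<in> sf m"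
  unfolding Rnum_def
  by (intro sf.sf_add sf.sf_mult sf_lm[OF m1] sf_prod[OF m1] sf_power[OF m1]) auto

lemma x_sf: "t \<in> tree n \<Longrightarrow> \<forall>i\<in>{1..n}. x t i \<in> sf m"
proof (induction t rule: tree_induct)
  case Nil then show ?case using initial nm by (auto intro!: sf.sf_var)
next
  case (snoc t0 k)
  let ?t = "t0 @ [k]"
  have k: "k \<in> {1..n}" and t0: "t0 \<in> tree n" using edge_k[OF snoc(1)] by auto
  have xr: "x_mutation_rel n m k (B t0) (y t0) (x t0) (x ?t)" using edge[OF snoc(1)] by blast
  show ?case
  proof
    fix i assume i: "i \<in> {1..n}"
    show "x ?t i \<in> sf m"
    proof (cases "i = k")
      case False
      then show ?thesis using xr i snoc(2) unfolding x_mutation_rel_def by auto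
    next
      case True
      have "x t0 k * x ?t k = Rnum t0 k / Lm (trop_add (y t0 k) (\<lambda>_. 0))"
        using xr unfolding x_mutation_rel_def Rnum_def by blast
      then have "x ?t k = Rnum t0 k / Lm (trop_add (y t0 k) (\<lambda>_. 0)) / x t0 k"
        using x_nonzero[OF t0 k] lm_nonzero by (simp add: field_simps)
      also have "\<dots> \<in> sf m"
        by (intro sf.sf_div Rnum_sf sf_lm[OF m1]) (use snoc(2) k in auto)
      finally show ?thesis using True by simp
    qed
  qed
qed

end


lemma sum_split_sign:
  fixes b :: "nat \<Rightarrow> int" and A :: "nat \<Rightarrow> int"
  assumes "finite I"
  shows "(\<Sum>i\<in>I. b i * A i) = (\<Sum>i\<in>{i\<in>I. b i > 0}. b i * A i) - (\<Sum>i\<in>{i\<in>I. b i < 0}. - b i * A i)"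
proof -
  have "(\<Sum>i\<in>{i\<in>I. b i > 0}. b i * A i) - (\<Sum>i\<in>{i\<in>I. b i < 0}. - b i * A i)
     = (\<Sum>i\<in>I. (if b i > 0 then b i * A i else 0)) - (\<Sum>i\<in>I. (if b i < 0 then - b i * A i else 0))"
    by (simp only: sum.inter_filter[OF assms])
  also have "\<dots> = (\<Sum>i\<in>I. (if b i > 0 then b i * A i else 0) - (if b i < 0 then - b i * A i else 0))"
    by (simp add: sum_subtractf)
  also have "\<dots> = (\<Sum>i\<in>I. b i * A i)"
    by (rule sum.cong) auto
  finally show ?thesis by simp
qed

lemma sum_maxneg:
  fixes b :: "nat \<Rightarrow> int" and A :: "nat \<Rightarrow> int"
  assumes "finite I"
  shows "(\<Sum>i\<in>I. max (- b i) 0 * A i) = (\<Sum>i\<in>{i\<in>I. b i < 0}. - b i * A i)"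
  by (simp only: sum.inter_filter[OF assms]) (rule sum.cong, auto)

lemma sgn_max_id:
  fixes p q :: int
  shows "sgn p * max (p * q) 0 = p * max q 0 + q * max (- p) 0"
proof (cases "p > 0")
  case True
  then show ?thesis
  proof (cases "q \<ge> 0")
    case q: True
    then have "p * q \<ge> 0" using True by simp
    then have "max (p*q) 0 = p*q" "max q 0 = q" "max (-p) 0 = 0" "sgn p = 1" using True q by auto
    then show ?thesis by simp
  next
    case q: False
    then have "p * q < 0" using True by (simp add: mult_pos_neg)
    then have "max (p*q) 0 = 0" "max q 0 = 0" "max (-p) 0 = 0" "sgn p = 1" using True q by auto
    then show ?thesis by simp
  qed
next
  case False
  then show ?thesis
  proof (cases "p = 0")
    case False
    then have "p < 0" using \<open>\<not> p > 0\<close> by simp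
    then show ?thesis
    proof (cases "q \<ge> 0")
      case q: True
      then have "p * q \<le> 0" using \<open>p < 0\<close> by (simp add: mult_nonpos_nonneg)
      then have "max (p*q) 0 = 0" "max q 0 = q" "max (-p) 0 = -p" "sgn p = -1" using \<open>p < 0\<close> q by auto
      then show ?thesis by simp
    next
      case q: False
      then have "p * q > 0" using \<open>p < 0\<close> by (simp add: mult_neg_neg)
      then have "max (p*q) 0 = p*q" "max q 0 = 0" "max (-p) 0 = -p" "sgn p = -1" using \<open>p < 0\<close> q by auto
      then show ?thesis by simp
    qed
  qed simp
qed

context ctx
begin

definition a :: "nat list \<Rightarrow> nat \<Rightarrow> nat \<Rightarrow> int" where "a t i = \<phi> (x t i)"
definition Lam :: "trop \<Rightarrow> nat \<Rightarrow> int" where "Lam e = (\<lambda>l. \<Sum>j\<in>{n+1..m}. e j * \<phi> (var j) l)"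
definition yb :: "nat list \<Rightarrow> nat \<Rightarrow> trop" where
  "yb t k = \<phi> (Lm (y t k) * (\<Prod>i\<in>{1..n}. x t i powi B t i k))"
definition xb :: "nat list \<Rightarrow> nat \<Rightarrow> rfun" where "xb t i = \<psi> (x t i) / Mb (\<phi> (x t i))"
definition Pp :: "nat list \<Rightarrow> nat \<Rightarrow> nat set" where "Pp t k = {i \<in> {1..n}. B t i k > 0}"
definition Pn :: "nat list \<Rightarrow> nat \<Rightarrow> nat set" where "Pn t k = {i \<in> {1..n}. B t i k < 0}"
definition SP :: "nat list \<Rightarrow> nat \<Rightarrow> trop" where "SP t k = (\<lambda>l. \<Sum>i\<in>Pp t k. B t i k * a t i l)"
definition SN :: "nat list \<Rightarrow> nat \<Rightarrow> trop" where "SN t k = (\<lambda>l. \<Sum>i\<in>Pn t k. - B t i k * a t i l)"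

lemma Pp_sub: "Pp t k \<subseteq> {1..n}" by (auto simp: Pp_def)
lemma Pn_sub: "Pn t k \<subseteq> {1..n}" by (auto simp: Pn_def)

lemma lm_sf_m: "Lm e \<in> sf m" by (rule sf_lm[OF m1])

lemma phi_lm': "\<phi> (Lm e) l = Lam e l" unfolding Lam_def by (rule phi_lm)

lemma yb_val0: "t \<in> tree n \<Longrightarrow> yb t k l = Lam (y t k) l + (\<Sum>i\<in>{1..n}. B t i k * a t i l)"
proof -
  assume t: "t \<in> tree n"
  note xs = x_sf[OF t]
  have p: "(\<Prod>i\<in>{1..n}. x t i powi B t i k) \<in> sf m"
    by (rule sf_prod[OF m1]) (use xs in \<open>auto intro: sf_powi[OF m1]\<close>)
  have "\<phi> (\<Prod>i\<in>{1..n}. x t i powi B t i k) l = (\<Sum>i\<in>{1..n}. \<phi> (x t i powi B t i k) l)"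
    by (rule phi_prod) (use xs in \<open>auto intro: sf_powi[OF m1]\<close>)
  also have "\<dots> = (\<Sum>i\<in>{1..n}. B t i k * a t i l)"
    by (rule sum.cong[OF refl]) (use xs x_nonzero[OF t] in \<open>simp add: phi_powi a_def\<close>)
  finally show ?thesis unfolding yb_def
    using phi_mult[OF lm_sf_m[of "y t k"] p, of l] phi_lm'[of "y t k" l] by simp
qed

lemma yb_val: "t \<in> tree n \<Longrightarrow> yb t k l = Lam (y t k) l + SP t k l - SN t k l"
proof -
  assume t: "t \<in> tree n"
  have "(\<Sum>i\<in>{1..n}. B t i k * a t i l) = (\<Sum>i\<in>{i\<in>{1..n}. B t i k > 0}. B t i k * a t i l) - (\<Sum>i\<in>{i\<in>{1..n}. B t i k < 0}. - B t i k * a t i l)"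
    by (rule sum_split_sign) simp
  then show ?thesis unfolding yb_val0[OF t] SP_def SN_def Pp_def Pn_def by simp
qed

lemma phi_Pp: "t \<in> tree n \<Longrightarrow> \<phi> (\<Prod>i\<in>Pp t k. x t i ^ nat (B t i k)) l = SP t k l"
proof -
  assume t: "t \<in> tree n"
  note xs = x_sf[OF t]
  have "\<phi> (\<Prod>i\<in>Pp t k. x t i ^ nat (B t i k)) l = (\<Sum>i\<in>Pp t k. \<phi> (x t i ^ nat (B t i k)) l)"
    by (rule phi_prod, rule sf_power[OF m1]) (use xs Pp_sub in blast)
  also have "\<dots> = SP t k l" unfolding SP_def
    by (rule sum.cong[OF refl]) (use xs Pp_sub in \<open>auto simp: phi_power a_def Pp_def\<close>)
  finally show ?thesis .
qed

lemma phi_Pn: "t \<in> tree n \<Longrightarrow> \<phi> (\<Prod>i\<in>Pn t k. x t i ^ nat (- B t i k)) l = SN t k l"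
proof -
  assume t: "t \<in> tree n"
  note xs = x_sf[OF t]
  have "\<phi> (\<Prod>i\<in>Pn t k. x t i ^ nat (- B t i k)) l = (\<Sum>i\<in>Pn t k. \<phi> (x t i ^ nat (- B t i k)) l)"
    by (rule phi_prod, rule sf_power[OF m1]) (use xs Pn_sub in blast)
  also have "\<dots> = SN t k l" unfolding SN_def
    by (rule sum.cong[OF refl]) (use xs Pn_sub in \<open>auto simp: phi_power a_def Pn_def\<close>)
  finally show ?thesis .
qed

lemma Pprod_sf: "t \<in> tree n \<Longrightarrow> (\<Prod>i\<in>Pp t k. x t i ^ nat (B t i k)) \<in> sf m"
proof -
  assume t: "t \<in> tree n"
  show ?thesis by (rule sf_prod[OF m1], rule sf_power[OF m1]) (use x_sf[OF t] Pp_sub in blast)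
qed
lemma Nprod_sf: "t \<in> tree n \<Longrightarrow> (\<Prod>i\<in>Pn t k. x t i ^ nat (- B t i k)) \<in> sf m"
proof -
  assume t: "t \<in> tree n"
  show ?thesis by (rule sf_prod[OF m1], rule sf_power[OF m1]) (use x_sf[OF t] Pn_sub in blast)
qed

lemma Rnum_eq: "Rnum t k = Lm (y t k) * (\<Prod>i\<in>Pp t k. x t i ^ nat (B t i k)) + (\<Prod>i\<in>Pn t k. x t i ^ nat (- B t i k))"
  by (simp add: Rnum_def Pp_def Pn_def)

lemma edge_rel: "tree_edge n t k t' \<Longrightarrow> x t k * x t' k * Lm (trop_add (y t k) (\<lambda>_. 0)) = Rnum t k"
proof -
  assume e: "tree_edge n t k t'"
  have "x t k * x t' k = Rnum t k / Lm (trop_add (y t k) (\<lambda>_. 0))"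
    using edge[OF e] unfolding x_mutation_rel_def Rnum_def by blast
  then show ?thesis using lm_nonzero by (simp add: field_simps)
qed

lemma edge_phi: "tree_edge n t k t' \<Longrightarrow>
   a t k l + a t' k l + Lam (trop_add (y t k) (\<lambda>_. 0)) l = min (Lam (y t k) l + SP t k l) (SN t k l)"
proof -
  assume e: "tree_edge n t k t'"
  have k: "k \<in> {1..n}" and t: "t \<in> tree n" and t': "t' \<in> tree n" using edge_k[OF e] by auto
  have xk: "x t k \<in> sf m" "x t' k \<in> sf m" using x_sf[OF t] x_sf[OF t'] k by auto
  have "\<phi> (x t k * x t' k * Lm (trop_add (y t k) (\<lambda>_. 0))) l = \<phi> (Rnum t k) l" using edge_rel[OF e] by simp
  then show ?thesis
    by (simp add: Rnum_eq phi_mult phi_add xk sf.sf_mult lm_sf_m Pprod_sf[OF t] Nprod_sf[OF t]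
        phi_lm' phi_Pp[OF t] phi_Pn[OF t] a_def)
qed

end


context ctx
begin

lemma Lam_neg: "Lam (\<lambda>l. - e l) l' = - Lam e l'"
  unfolding Lam_def by (simp add: sum_negf)

lemma Lam_ymut: "Lam (\<lambda>l. e1 l + c * e2 l - d * min (e2 l) 0) l' = Lam e1 l' + c * Lam e2 l' - d * Lam (trop_add e2 (\<lambda>_. 0)) l'"
  unfolding Lam_def trop_add_def
  by (simp add: algebra_simps sum.distrib sum_subtractf sum_distrib_left)

lemma edge_facts:
  assumes e: "tree_edge n t k t'"
  shows "k \<in> {1..n}" "t \<in> tree n" "t' \<in> tree n"
    "\<And>i j. i \<in> {1..n} \<Longrightarrow> j \<in> {1..n} \<Longrightarrow> B t' i j = (if i = k \<or> j = k then - B t i j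
                  else B t i j + sgn (B t i k) * max (B t i k * B t k j) 0)"
    "y t' k = (\<lambda>l. - y t k l)"
    "\<And>j. j \<in> {1..n} \<Longrightarrow> j \<noteq> k \<Longrightarrow> y t' j = (\<lambda>l. y t j l + max (B t k j) 0 * y t k l - B t k j * min (y t k l) 0)"
    "\<And>i. i \<in> {1..n} \<Longrightarrow> i \<noteq> k \<Longrightarrow> x t' i = x t i"
  using edge_k[OF e] edge[OF e] unfolding matrix_mutation_rel_def y_mutation_rel_def x_mutation_rel_def
  by auto

lemma edgeA: assumes e: "tree_edge n t k t'" shows "yb t' k = (\<lambda>l. - yb t k l)"
proof
  fix l
  note f = edge_facts[OF e]
  have "(\<Sum>i\<in>{1..n}. B t' i k * a t' i l) = (\<Sum>i\<in>{1..n}. - (B t i k * a t i l))"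
  proof (rule sum.cong[OF refl])
    fix i assume i: "i \<in> {1..n}"
    show "B t' i k * a t' i l = - (B t i k * a t i l)"
    proof (cases "i = k")
      case True
      then show ?thesis using f(4)[OF i f(1)] Bkk[OF f(2) f(1)] by simp
    next
      case False
      then show ?thesis using f(4)[OF i f(1)] f(7)[OF i] by (simp add: a_def)
    qed
  qed
  then show "yb t' k l = - yb t k l"
    by (simp add: yb_val0[OF f(3)] yb_val0[OF f(2)] f(5) Lam_neg sum_negf)
qed

lemma edgeB:
  assumes e: "tree_edge n t k t'" and j: "j \<in> {1..n}" "j \<noteq> k"
  shows "yb t' j = (\<lambda>l. yb t j l + max (B t k j) 0 * yb t k l - B t k j * min (yb t k l) 0)"
proof
  fix l
  note f = edge_facts[OF e]
  define I where "I = {1..n::nat}"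
  have kI: "k \<in> I" using f(1) by (simp add: I_def)
  have finI: "finite I" by (simp add: I_def)
  define A where "A i = a t i l" for i
  define A' where "A' = a t' k l"
  define bkj where "bkj = B t k j"
  define G where "G i = (B t i j + B t i k * max bkj 0 + bkj * max (- B t i k) 0) * A i" for i
  have Gk: "G k = bkj * A k" using Bkk[OF f(2) f(1)] by (simp add: G_def bkj_def)
  have "(\<Sum>i\<in>I. B t' i j * a t' i l) = B t' k j * a t' k l + (\<Sum>i\<in>I - {k}. B t' i j * a t' i l)"
    by (rule sum.remove[OF finI kI])
  also have "B t' k j * a t' k l = - bkj * A'"
    using f(4)[OF f(1) j(1)] by (simp add: bkj_def A'_def)
  also have "(\<Sum>i\<in>I - {k}. B t' i j * a t' i l) = (\<Sum>i\<in>I - {k}. G i)"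
  proof (rule sum.cong[OF refl])
    fix i assume i: "i \<in> I - {k}"
    then have i1: "i \<in> {1..n}" "i \<noteq> k" by (auto simp: I_def)
    have "B t' i j = B t i j + sgn (B t i k) * max (B t i k * B t k j) 0"
      using f(4)[OF i1(1) j(1)] i1(2) j(2) by simp
    also have "\<dots> = B t i j + B t i k * max bkj 0 + bkj * max (- B t i k) 0"
      using sgn_max_id[of "B t i k" "B t k j"] by (simp add: bkj_def)
    finally show "B t' i j * a t' i l = G i"
      using f(7)[OF i1] by (simp add: G_def A_def a_def)
  qed
  also have "(\<Sum>i\<in>I - {k}. G i) = (\<Sum>i\<in>I. G i) - G k"
    using sum.remove[OF finI kI, of G] by simp
  also have "(\<Sum>i\<in>I. G i) = (\<Sum>i\<in>I. B t i j * A i) + max bkj 0 * (\<Sum>i\<in>I. B t i k * A i)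
       + bkj * (\<Sum>i\<in>I. max (- B t i k) 0 * A i)"
    by (simp add: G_def algebra_simps sum.distrib sum_distrib_left)
  also have "(\<Sum>i\<in>I. B t i k * A i) = SP t k l - SN t k l"
    using yb_val0[OF f(2), of k l] yb_val[OF f(2), of k l] by (simp add: I_def A_def)
  also have "(\<Sum>i\<in>I. max (- B t i k) 0 * A i) = SN t k l"
    unfolding SN_def Pn_def I_def A_def by (rule sum_maxneg) simp
  finally have S: "(\<Sum>i\<in>I. B t' i j * a t' i l) = - bkj * A' + ((\<Sum>i\<in>I. B t i j * A i) +
     max bkj 0 * (SP t k l - SN t k l) + bkj * SN t k l - bkj * A k)" by (simp add: Gk)
  have ph: "A k + A' + Lam (trop_add (y t k) (\<lambda>_. 0)) l = min (Lam (y t k) l + SP t k l) (SN t k l)"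
    using edge_phi[OF e, of l] by (simp add: A_def A'_def)
  define M0 where "M0 = min (Lam (y t k) l + SP t k l - SN t k l) 0"
  have mm: "min (Lam (y t k) l + SP t k l) (SN t k l) = SN t k l + M0" by (simp add: M0_def min_def)
  have A'eq: "A' = SN t k l + M0 - Lam (trop_add (y t k) (\<lambda>_. 0)) l - A k" using ph mm by simp
  have ybk: "yb t k l = Lam (y t k) l + SP t k l - SN t k l" by (rule yb_val[OF f(2)])
  have "yb t' j l = Lam (y t' j) l + (\<Sum>i\<in>I. B t' i j * a t' i l)"
    by (simp add: yb_val0[OF f(3)] I_def)
  also have "Lam (y t' j) l = Lam (y t j) l + max bkj 0 * Lam (y t k) l - bkj * Lam (trop_add (y t k) (\<lambda>_. 0)) l"
    by (simp add: f(6)[OF j] Lam_ymut bkj_def)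
  finally have "yb t' j l = Lam (y t j) l + max bkj 0 * Lam (y t k) l - bkj * Lam (trop_add (y t k) (\<lambda>_. 0)) l
     + (- bkj * (SN t k l + M0 - Lam (trop_add (y t k) (\<lambda>_. 0)) l - A k) + ((\<Sum>i\<in>I. B t i j * A i) +
     max bkj 0 * (SP t k l - SN t k l) + bkj * SN t k l - bkj * A k))" using S A'eq by simp
  also have "\<dots> = (Lam (y t j) l + (\<Sum>i\<in>I. B t i j * A i)) + max bkj 0 * (Lam (y t k) l + SP t k l - SN t k l) - bkj * M0"
    by (simp add: algebra_simps)
  also have "\<dots> = yb t j l + max (B t k j) 0 * yb t k l - B t k j * min (yb t k l) 0"
    by (simp add: yb_val0[OF f(2), of j l] ybk M0_def bkj_def I_def A_def)
  finally show "yb t' j l = yb t j l + max (B t k j) 0 * yb t k l - B t k j * min (yb t k l) 0" .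
qed

lemma edge_ymut: "tree_edge n t k t' \<Longrightarrow> y_mutation_rel n k (B t) (yb t) (yb t')"
  unfolding y_mutation_rel_def using edgeA edgeB by blast

end


context ctx
begin

lemma psi_x: "t \<in> tree n \<Longrightarrow> i \<in> {1..n} \<Longrightarrow> \<psi> (x t i) = xb t i * Mb (a t i)"
  by (simp add: xb_def a_def lm_nonzero)

lemma psi_lm': "\<psi> (Lm e) = Mb (Lam e)"
  unfolding Lam_def by (rule psi_lm)

lemma lm_pow: "Mb e ^ p = Mb (\<lambda>l. int p * e l)"
  by (simp add: lm_scale)

lemma psi_Pp: assumes t: "t \<in> tree n"
  shows "\<psi> (\<Prod>i\<in>Pp t k. x t i ^ nat (B t i k)) = (\<Prod>i\<in>Pp t k. xb t i ^ nat (B t i k)) * Mb (SP t k)"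
proof -
  note xs = x_sf[OF t]
  have "\<psi> (\<Prod>i\<in>Pp t k. x t i ^ nat (B t i k)) = (\<Prod>i\<in>Pp t k. \<psi> (x t i ^ nat (B t i k)))"
    by (rule psi_prod, rule sf_power[OF m1]) (use xs Pp_sub in blast)
  also have "\<dots> = (\<Prod>i\<in>Pp t k. xb t i ^ nat (B t i k) * Mb (\<lambda>l. B t i k * a t i l))"
  proof (rule prod.cong[OF refl])
    fix i assume i: "i \<in> Pp t k"
    then have i1: "i \<in> {1..n}" "B t i k > 0" by (auto simp: Pp_def)
    show "\<psi> (x t i ^ nat (B t i k)) = xb t i ^ nat (B t i k) * Mb (\<lambda>l. B t i k * a t i l)"
      using i1 xs by (simp add: psi_power psi_x[OF t] power_mult_distrib lm_pow)
  qed
  also have "\<dots> = (\<Prod>i\<in>Pp t k. xb t i ^ nat (B t i k)) * Mb (SP t k)"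
    by (simp add: prod.distrib SP_def lm_sum)
  finally show ?thesis .
qed

lemma psi_Pn: assumes t: "t \<in> tree n"
  shows "\<psi> (\<Prod>i\<in>Pn t k. x t i ^ nat (- B t i k)) = (\<Prod>i\<in>Pn t k. xb t i ^ nat (- B t i k)) * Mb (SN t k)"
proof -
  note xs = x_sf[OF t]
  have "\<psi> (\<Prod>i\<in>Pn t k. x t i ^ nat (- B t i k)) = (\<Prod>i\<in>Pn t k. \<psi> (x t i ^ nat (- B t i k)))"
    by (rule psi_prod, rule sf_power[OF m1]) (use xs Pn_sub in blast)
  also have "\<dots> = (\<Prod>i\<in>Pn t k. xb t i ^ nat (- B t i k) * Mb (\<lambda>l. - B t i k * a t i l))"
  proof (rule prod.cong[OF refl])
    fix i assume i: "i \<in> Pn t k"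
    then have i1: "i \<in> {1..n}" "B t i k < 0" by (auto simp: Pn_def)
    show "\<psi> (x t i ^ nat (- B t i k)) = xb t i ^ nat (- B t i k) * Mb (\<lambda>l. - B t i k * a t i l)"
      using i1 xs by (simp add: psi_power psi_x[OF t] power_mult_distrib lm_pow)
  qed
  also have "\<dots> = (\<Prod>i\<in>Pn t k. xb t i ^ nat (- B t i k)) * Mb (SN t k)"
    by (simp add: prod.distrib SN_def lm_sum)
  finally show ?thesis .
qed

lemma edgeC:
  assumes e: "tree_edge n t k t'"
  shows "xb t k * xb t' k = (Mb (yb t k) * (\<Prod>i\<in>Pp t k. xb t i ^ nat (B t i k))
            + (\<Prod>i\<in>Pn t k. xb t i ^ nat (- B t i k))) / Mb (trop_add (yb t k) (\<lambda>_. 0))"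
proof -
  note f = edge_facts[OF e]
  have xk: "x t k \<in> sf m" "x t' k \<in> sf m" using x_sf[OF f(2)] x_sf[OF f(3)] f(1) by auto
  define Qp where "Qp = (\<Prod>i\<in>Pp t k. xb t i ^ nat (B t i k))"
  define Qn where "Qn = (\<Prod>i\<in>Pn t k. xb t i ^ nat (- B t i k))"
  define A1 where "A1 = Mb (\<lambda>l. Lam (y t k) l + SP t k l)"
  define A2 where "A2 = Mb (SN t k)"
  define A3 where "A3 = Mb (\<lambda>l. min (Lam (y t k) l + SP t k l) (SN t k l))"
  have nz: "A1 \<noteq> 0" "A2 \<noteq> 0" "A3 \<noteq> 0" "Mb (a t k) \<noteq> 0" "Mb (a t' k) \<noteq> 0"
    by (simp_all add: A1_def A2_def A3_def lm_nonzero)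
  have "\<psi> (x t k * x t' k * Lm (trop_add (y t k) (\<lambda>_. 0))) = \<psi> (Rnum t k)"
    using edge_rel[OF e] by simp
  then have psieq: "\<psi> (x t k) * \<psi> (x t' k) * Mb (Lam (trop_add (y t k) (\<lambda>_. 0))) = A1 * Qp + A2 * Qn"
    by (simp add: Rnum_eq psi_mult psi_add xk sf.sf_mult lm_sf_m Pprod_sf[OF f(2)] Nprod_sf[OF f(2)]
        psi_lm' psi_Pp[OF f(2)] psi_Pn[OF f(2)] A1_def A2_def Qp_def Qn_def lm_add mult_ac)
  have "Mb (Lam (trop_add (y t k) (\<lambda>_. 0))) * Mb (a t k) * Mb (a t' k)
      = Mb (\<lambda>l. a t k l + a t' k l + Lam (trop_add (y t k) (\<lambda>_. 0)) l)"
    by (simp add: lm_add mult_ac)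
  also have "\<dots> = A3" unfolding A3_def by (rule arg_cong[where f = Mb]) (rule ext, rule edge_phi[OF e])
  finally have m3: "Mb (Lam (trop_add (y t k) (\<lambda>_. 0))) * Mb (a t k) * Mb (a t' k) = A3" .
  have y1: "Mb (yb t k) = A1 / A2"
  proof -
    have "yb t k = (\<lambda>l. (Lam (y t k) l + SP t k l) - SN t k l)" by (rule ext) (simp add: yb_val[OF f(2)])
    then show ?thesis by (simp add: A1_def A2_def lm_diff)
  qed
  have y2: "Mb (trop_add (yb t k) (\<lambda>_. 0)) = A3 / A2"
  proof -
    have "trop_add (yb t k) (\<lambda>_. 0) = (\<lambda>l. min (Lam (y t k) l + SP t k l) (SN t k l) - SN t k l)"
      by (rule ext) (simp add: trop_add_def yb_val[OF f(2)] min_def)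
    then show ?thesis by (simp add: A3_def A2_def lm_diff)
  qed
  have xbk: "xb t k = \<psi> (x t k) / Mb (a t k)" "xb t' k = \<psi> (x t' k) / Mb (a t' k)"
    by (simp_all add: xb_def a_def)
  have "xb t k * xb t' k = (\<psi> (x t k) * \<psi> (x t' k) * Mb (Lam (trop_add (y t k) (\<lambda>_. 0))))
     / (Mb (Lam (trop_add (y t k) (\<lambda>_. 0))) * Mb (a t k) * Mb (a t' k))"
    using nz lm_nonzero by (simp add: xbk field_simps)
  also have "\<dots> = (A1 * Qp + A2 * Qn) / A3" by (simp add: psieq m3)
  also have "\<dots> = (A1 / A2 * Qp + Qn) / (A3 / A2)" using nz by (simp add: field_simps)
  finally show ?thesis by (simp add: y1 y2 Qp_def Qn_def)
qed

lemma edge_xmut: "tree_edge n t k t' \<Longrightarrow> x_mutation_rel n mbar k (B t) (yb t) (xb t) (xb t')"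
proof -
  assume e: "tree_edge n t k t'"
  note f = edge_facts[OF e]
  show ?thesis unfolding x_mutation_rel_def
    using edgeC[OF e] f(7) by (simp add: xb_def Pp_def Pn_def)
qed

end


context ctx
begin

definition gb :: "nat list \<Rightarrow> nat \<Rightarrow> rfun" where
  "gb t = (\<lambda>i. if i \<le> n then xb t i else var i)"

lemma lm_nonneg: "(\<And>l. e l \<ge> 0) \<Longrightarrow> laurent_mono n M e = (\<Prod>j\<in>{n+1..M}. var j ^ nat (e j))"
  unfolding laurent_mono_def by (rule prod.cong[OF refl]) (simp add: power_int_def)

lemma U_rep:
  assumes e: "tree_edge n t k t'"
  shows "\<exists>U. U \<noteq> 0 \<and> poly_in ({1..mbar} - {k}) U \<and> gb t k * gb t' k = eval_poly U (gb t)"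
proof -
  note f = edge_facts[OF e]
  define Y where "Y = yb t k"
  define E1 where "E1 = (\<Prod>j\<in>{n+1..mbar}. Xv j ^ nat (max (Y j) 0))"
  define E2 where "E2 = (\<Prod>j\<in>{n+1..mbar}. Xv j ^ nat (max (- Y j) 0))"
  define F1 where "F1 = (\<Prod>i\<in>Pp t k. Xv i ^ nat (B t i k))"
  define F2 where "F2 = (\<Prod>i\<in>Pn t k. Xv i ^ nat (- B t i k))"
  define U where "U = E1 * F1 + E2 * F2"
  define Mp where "Mp = Mb (\<lambda>l. max (Y l) 0)"
  define Mn where "Mn = Mb (\<lambda>l. max (- Y l) 0)"
  define Qp where "Qp = (\<Prod>i\<in>Pp t k. xb t i ^ nat (B t i k))"
  define Qn where "Qn = (\<Prod>i\<in>Pn t k. xb t i ^ nat (- B t i k))"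
  have gbv: "gb t j = var j" if "j \<in> {n+1..mbar}" for j using that by (simp add: gb_def)
  have gbx: "gb t i = xb t i" if "i \<in> {1..n}" for i using that by (simp add: gb_def)
  have eE1: "eval_poly E1 (gb t) = Mp"
    unfolding E1_def Mp_def by (simp add: eval_prod eval_power gbv lm_nonneg)
  have eE2: "eval_poly E2 (gb t) = Mn"
    unfolding E2_def Mn_def by (simp add: eval_prod eval_power gbv lm_nonneg)
  have gp: "gb t i = xb t i" if "i \<in> Pp t k" for i using that Pp_sub gbx by blast
  have gn: "gb t i = xb t i" if "i \<in> Pn t k" for i using that Pn_sub gbx by blast
  have eF1: "eval_poly F1 (gb t) = Qp"
    unfolding F1_def Qp_def by (simp add: eval_prod eval_power gp)
  have eF2: "eval_poly F2 (gb t) = Qn"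
    unfolding F2_def Qn_def by (simp add: eval_prod eval_power gn)
  have MY: "Mb Y = Mp / Mn"
  proof -
    have "Y = (\<lambda>l. max (Y l) 0 - max (- Y l) 0)" by (rule ext) (simp add: max_def)
    then show ?thesis unfolding Mp_def Mn_def by (metis lm_diff)
  qed
  have MT: "Mb (trop_add Y (\<lambda>_. 0)) = 1 / Mn"
  proof -
    have "trop_add Y (\<lambda>_. 0) = (\<lambda>l. - max (- Y l) 0)" by (rule ext) (simp add: trop_add_def max_def min_def)
    then show ?thesis unfolding Mn_def by (metis lm_neg)
  qed
  have Mn0: "Mn \<noteq> 0" by (simp add: Mn_def lm_nonzero)
  have "gb t k * gb t' k = xb t k * xb t' k" using f(1) by (simp add: gb_def)
  also have "\<dots> = (Mb Y * Qp + Qn) / Mb (trop_add Y (\<lambda>_. 0))"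
    by (simp add: edgeC[OF e] Y_def Qp_def Qn_def)
  also have "\<dots> = Mp * Qp + Mn * Qn" using Mn0 by (simp add: MY MT field_simps)
  also have "\<dots> = eval_poly U (gb t)" by (simp add: U_def eval_add eval_mult eE1 eE2 eF1 eF2)
  finally have rel: "gb t k * gb t' k = eval_poly U (gb t)" .
  have U0: "U \<noteq> 0"
  proof -
    obtain \<alpha> \<beta> where ab: "E1 * F1 = Poly_Mapping.single \<alpha> 1" "E2 * F2 = Poly_Mapping.single \<beta> 1"
      unfolding E1_def E2_def F1_def F2_def by (simp add: Xv_prod_power mult_single)
    have "Poly_Mapping.lookup U \<alpha> = 1 + Poly_Mapping.lookup (Poly_Mapping.single \<beta> (1::rat)) \<alpha>"
      by (simp add: U_def ab lookup_add)
    also have "\<dots> \<noteq> 0" by (simp add: lookup_single when_def)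
    finally show ?thesis by auto
  qed
  have Bk: "B t k k = 0" by (rule Bkk[OF f(2) f(1)])
  have Uin: "poly_in ({1..mbar} - {k}) U"
    unfolding U_def E1_def E2_def F1_def F2_def
    using f(1) nmb Bk
    by (intro poly_in_add poly_in_mult poly_in_prod poly_in_power poly_in_Xv) (auto simp: Pp_def Pn_def)
  show ?thesis using U0 Uin rel by blast
qed

lemma bar_vertex: "t \<in> tree n \<Longrightarrow> alg_indep {1..mbar} (gb t) \<and> gen_field {1..mbar} (gb t) = ratfield mbar"
proof (induction t rule: tree_induct)
  case Nil
  have g: "gb [] i = var i" if "i \<in> {1..mbar}" for i
  proof (cases "i \<le> n")
    case True
    then have "i \<in> {1..n}" using that by simp
    then show ?thesis using initial psi_low lm_nonzero by (simp add: gb_def xb_def)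
  qed (simp add: gb_def)
  show ?case
  proof
    show "alg_indep {1..mbar} (gb [])" by (rule alg_indep_cong[OF alg_indep_var]) (simp add: g)
    show "gen_field {1..mbar} (gb []) = ratfield mbar" unfolding ratfield_def
      by (rule gen_field_cong) (simp add: g)
  qed
next
  case (snoc t0 k)
  let ?t = "t0 @ [k]"
  note f = edge_facts[OF snoc(1)]
  obtain U where U: "U \<noteq> 0" "poly_in ({1..mbar} - {k}) U" "gb t0 k * gb ?t k = eval_poly U (gb t0)"
    using U_rep[OF snoc(1)] by blast
  have kA: "k \<in> {1..mbar}" using f(1) nmb by simp
  have same: "gb ?t i = gb t0 i" if "i \<in> {1..mbar} - {k}" for i
    using that f(7)[of i] by (simp add: gb_def xb_def)
  have ind: "alg_indep {1..mbar} (gb t0)" using snoc(2) by blast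
  show ?case
  proof
    show "alg_indep {1..mbar} (gb ?t)" by (rule mutation_indep[OF ind kA U(1) U(2) same U(3)])
    have "gen_field {1..mbar} (gb ?t) = gen_field {1..mbar} (gb t0)"
      by (rule mutation_gen[OF ind kA U(1) U(2) same U(3)])
    then show "gen_field {1..mbar} (gb ?t) = ratfield mbar" using snoc(2) by simp
  qed
qed

lemma bar_pattern: "seed_pattern n mbar xb yb B"
  unfolding seed_pattern_def
proof (intro conjI allI impI ballI)
  fix t assume t: "t \<in> tree n"
  note bv = bar_vertex[OF t]
  show "alg_indep {1..mbar} (\<lambda>i. if i \<le> n then xb t i else var i)" using bv by (simp add: gb_def)
  show "gen_field {1..mbar} (\<lambda>i. if i \<le> n then xb t i else var i) = ratfield mbar" using bv by (simp add: gb_def)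
  show "skew_symmetrizable n (B t)" using vertex[OF t] by blast
  fix i assume i: "i \<in> {1..n}"
  have "gb t i \<in> gen_field {1..mbar} (gb t)" by (rule gen_field_gen) (use i nmb in simp)
  then show "xb t i \<in> ratfield mbar" using bv i by (simp add: gb_def)
next
  fix t k assume t: "t \<in> tree n" and k: "k \<in> {1..n}"
  have p: "(\<Prod>i\<in>{1..n}. x t i powi B t i k) \<in> sf m"
    by (rule sf_prod[OF m1], rule sf_powi[OF m1]) (use x_sf[OF t] in blast)
  show "yb t k \<in> trop_set n mbar" unfolding yb_def
    by (rule phi_trop) (rule sf.sf_mult[OF lm_sf_m p])
next
  fix t k t' assume e: "tree_edge n t k t'"
  show "matrix_mutation_rel n k (B t) (B t')" using edge[OF e] by blast
  show "y_mutation_rel n k (B t) (yb t) (yb t')" by (rule edge_ymut[OF e])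
  show "x_mutation_rel n mbar k (B t) (yb t) (xb t) (xb t')" by (rule edge_xmut[OF e])
qed

end

theorem theorem4p3p4:
  fixes n m mbar :: nat
    and \<phi> :: "rfun \<Rightarrow> trop" and \<psi> :: "rfun \<Rightarrow> rfun"
    and x :: "nat list \<Rightarrow> nat \<Rightarrow> rfun" and y :: "nat list \<Rightarrow> nat \<Rightarrow> trop"
    and B :: "nat list \<Rightarrow> nat \<Rightarrow> nat \<Rightarrow> int"
  assumes "0 < n" and "n \<le> m" and "n \<le> mbar"
    and hom_phi: "sf_hom_trop m n mbar \<phi>"
    and hom_psi: "sf_hom m mbar \<psi>"
    and psi_low: "\<forall>i \<in> {1..n}. \<psi> (var i) = var i * laurent_mono n mbar (\<phi> (var i))"
    and psi_high: "\<forall>i \<in> {n+1..m}. \<psi> (var i) = laurent_mono n mbar (\<phi> (var i))"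
    and pattern: "seed_pattern n m x y B"
    and initial: "\<forall>i \<in> {1..n}. x [] i = var i"
  shows "seed_pattern n mbar
           (\<lambda>t i. \<psi> (x t i) / laurent_mono n mbar (\<phi> (x t i)))
           (\<lambda>t k. \<phi> (laurent_mono n m (y t k) * (\<Prod>i \<in> {1..n}. x t i powi B t i k)))
           B"
proof -
  interpret c: ctx n m mbar \<phi> \<psi> x y B
    by (unfold_locales) (fact assms)+
  have "c.xb = (\<lambda>t i. \<psi> (x t i) / laurent_mono n mbar (\<phi> (x t i)))"
    by (intro ext) (simp add: c.xb_def)
  moreover have "c.yb = (\<lambda>t k. \<phi> (laurent_mono n m (y t k) * (\<Prod>i \<in> {1..n}. x t i powi B t i k)))"
    by (intro ext) (simp add: c.yb_def)
  ultimately show ?thesis using c.bar_pattern by simp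
qed


end
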